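(* Let $E,F$ be vector lattices with $F$ Dedekind complete, and let $T,S\in\mathcal{U}_{+}(E,F)$. Then $T\wedge S=0$ in $\mathcal{U}(E,F)$ if and only if for every $e\in E$ and every $\varepsilon>0$ there exist a partition of unity $(\rho_{\alpha})$ in $\mathfrak{B}(F)$ and a family $(e_{\alpha})$ of fragments of $e$ (indexed by the same set) such that for every $\alpha$ $$\rho_{\alpha}T(e_{\alpha})\leq\varepsilon\, T(e)\quad\text{and}\quad \rho_{\alpha}S(e-e_{\alpha})\leq\varepsilon\, S(e).$$
   Context: For vector lattices $E,F$, an operator (not necessarily linear) $T:E\to F$ is orthogonally additive if $T(x+y)=T(x)+T(y)$ whenever $x\perp y$ (so $T(0)=0$); it is positive if $T(x)\geq 0$ for all $x\in E$; it is order bounded if it maps order bounded subsets of $E$ to order bounded subsets of $F$. An orthogonally additive order bounded operator is an abstract Uryson operator; $\mathcal{U}(E,F)$ denotes the vector space of all of them and $\mathcal{U}_{+}(E,F)$ the positive ones. $\mathcal{U}(E,F)$ is ordered by $S\leq T$ iff $T-S$ is positive; when $F$ is Dedekind complete, $\mathcal{U}(E,F)$ is a Dedekind complete vector lattice with $(T\wedge S)(f)=\inf\{Tg+Sh: f=g+h,\ g\perp h\}$. An element $z\in E$ is a fragment of $x\in E$, written $z\sqsubseteq x$, if $z\perp(x-z)$; $\mathcal{F}_{x}$ is the set of fragments of $x$. $\mathfrak{B}(F)$ denotes the Boolean algebra of band (order) projections on the Dedekind complete vector lattice $F$; for $\rho\in\mathfrak{B}(F)$, $\rho^{\perp}=I-\rho$.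 A partition of unity in $\mathfrak{B}(F)$ is a family of mutually disjoint band projections whose supremum is the identity. *)

theory Defs
  imports Complex_Main
begin

text \<open>Vector lattices are modelled by types of class
  ordered_real_vector + lattice; Dedekind complete vector lattices by
  ordered_real_vector + conditionally_complete_lattice (every nonempty
  bounded-above set has a supremum).\<close>

definition vabs :: "'a::{ordered_real_vector, lattice} \<Rightarrow> 'a" where
  "vabs x = sup x (- x)"

definition disj :: "'a::{ordered_real_vector, lattice} \<Rightarrow> 'a \<Rightarrow> bool" where
  "disj x y \<longleftrightarrow> inf (vabs x) (vabs y) = 0"

definition fragment :: "'a::{ordered_real_vector, lattice} \<Rightarrow> 'a \<Rightarrow> bool" where
  "fragment z x \<longleftrightarrow> disj z (x - z)"

definition orth_additive :: "('a::{ordered_real_vector, lattice} \<Rightarrow> 'b::{ordered_real_vector, lattice}) \<Rightarrow> bool" where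
  "orth_additive T \<longleftrightarrow> (\<forall>x y. disj x y \<longrightarrow> T (x + y) = T x + T y)"

definition order_bounded_op :: "('a::{ordered_real_vector, lattice} \<Rightarrow> 'b::{ordered_real_vector, lattice}) \<Rightarrow> bool" where
  "order_bounded_op T \<longleftrightarrow>
     (\<forall>a b. \<exists>c d. \<forall>x. a \<le> x \<and> x \<le> b \<longrightarrow> c \<le> T x \<and> T x \<le> d)"

definition uryson :: "('a::{ordered_real_vector, lattice} \<Rightarrow> 'b::{ordered_real_vector, lattice}) \<Rightarrow> bool" where
  "uryson T \<longleftrightarrow> orth_additive T \<and> order_bounded_op T"

definition positive_op :: "('a \<Rightarrow> 'b::{ordered_real_vector, lattice}) \<Rightarrow> bool" where
  "positive_op T \<longleftrightarrow> (\<forall>x. 0 \<le> T x)"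

definition op_le :: "('a \<Rightarrow> 'b::{ordered_real_vector, lattice}) \<Rightarrow> ('a \<Rightarrow> 'b) \<Rightarrow> bool" where
  "op_le S T \<longleftrightarrow> positive_op (\<lambda>x. T x - S x)"

definition is_inf_U :: "('a::{ordered_real_vector, lattice} \<Rightarrow> 'b::{ordered_real_vector, lattice})
     \<Rightarrow> ('a \<Rightarrow> 'b) \<Rightarrow> ('a \<Rightarrow> 'b) \<Rightarrow> bool" where
  "is_inf_U T S R \<longleftrightarrow> uryson R \<and> op_le R T \<and> op_le R S \<and>
     (\<forall>Q. uryson Q \<and> op_le Q T \<and> op_le Q S \<longrightarrow> op_le Q R)"

definition band :: "'b::{ordered_real_vector, conditionally_complete_lattice} set \<Rightarrow> bool" where
  "band B \<longleftrightarrow> 0 \<in> B \<and> (\<forall>x\<in>B. \<forall>y\<in>B. x + y \<in> B) \<and> (\<forall>c. \<forall>x\<in>B. c *\<^sub>R x \<in> B) \<and>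
     (\<forall>x\<in>B. \<forall>y. vabs y \<le> vabs x \<longrightarrow> y \<in> B) \<and>
     (\<forall>D. D \<subseteq> B \<and> D \<noteq> {} \<and> bdd_above D \<longrightarrow> Sup D \<in> B)"

definition disj_compl :: "'a::{ordered_real_vector, lattice} set \<Rightarrow> 'a set" where
  "disj_compl B = {y. \<forall>x\<in>B. disj x y}"

definition band_proj :: "('b::{ordered_real_vector, conditionally_complete_lattice} \<Rightarrow> 'b) \<Rightarrow> bool" where
  "band_proj \<rho> \<longleftrightarrow> (\<exists>B. band B \<and> (\<forall>x. \<rho> x \<in> B \<and> x - \<rho> x \<in> disj_compl B))"

definition proj_le :: "('b::{ordered_real_vector, lattice} \<Rightarrow> 'b) \<Rightarrow> ('b \<Rightarrow> 'b) \<Rightarrow> bool" where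
  "proj_le \<pi> \<rho> \<longleftrightarrow> (\<forall>x. 0 \<le> x \<longrightarrow> \<pi> x \<le> \<rho> x)"

text \<open>Partition of unity in the Boolean algebra of band projections, indexed
  by the set A: mutually disjoint band projections whose supremum (in the
  Boolean algebra of band projections) is the identity.\<close>
definition partition_of_unity ::
  "'i set \<Rightarrow> ('i \<Rightarrow> ('b::{ordered_real_vector, conditionally_complete_lattice} \<Rightarrow> 'b)) \<Rightarrow> bool" where
  "partition_of_unity A \<rho> \<longleftrightarrow>
     (\<forall>\<alpha>\<in>A. band_proj (\<rho> \<alpha>)) \<and>
     (\<forall>\<alpha>\<in>A. \<forall>\<beta>\<in>A. \<alpha> \<noteq> \<beta> \<longrightarrow> (\<forall>x. \<rho> \<alpha> (\<rho> \<beta> x) = 0)) \<and>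
     (\<forall>\<pi>. band_proj \<pi> \<and> (\<forall>\<alpha>\<in>A. proj_le (\<rho> \<alpha>) \<pi>) \<longrightarrow> \<pi> = id)"

end

theory Submission
  imports Defs "HOL-Library.Lattice_Algebras"
begin

lemma LG: "class.lattice_ab_group_add (+) (0::'a::{ordered_real_vector,lattice}) (-) uminus (\<le>) (<) inf sup"
  by unfold_locales

definition pp :: "'a::{ordered_real_vector,lattice} \<Rightarrow> 'a" where "pp x = sup x 0"
definition np :: "'a::{ordered_real_vector,lattice} \<Rightarrow> 'a" where "np x = sup (-x) 0"

context
  fixes dummy :: "'a::{ordered_real_vector,lattice}"
begin

lemma add_sup_l: "(a::'a) + sup b c = sup (a+b) (a+c)"
proof (rule order.antisym)
  show "a + sup b c \<le> sup (a+b) (a+c)"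
    by (metis add.commute le_diff_eq sup.bounded_iff sup_ge1 sup_ge2)
qed simp

lemma add_inf_l: "(a::'a) + inf b c = inf (a+b) (a+c)"
proof (rule order.antisym)
  show "inf (a+b) (a+c) \<le> a + inf b c"
    by (metis add.commute diff_le_eq inf_greatest inf_le1 inf_le2)
qed simp

lemma add_sup_r: "sup (b::'a) c + a = sup (b+a) (c+a)"
  using add_sup_l[of a b c] by (simp add: add.commute)

lemma add_inf_r: "inf (b::'a) c + a = inf (b+a) (c+a)"
  using add_inf_l[of a b c] by (simp add: add.commute)

lemma neg_sup: "- sup (a::'a) b = inf (-a) (-b)"
  using lattice_ab_group_add.neg_sup_eq_inf[OF LG] by blast

lemma neg_inf: "- inf (a::'a) b = sup (-a) (-b)"
  using lattice_ab_group_add.neg_inf_eq_sup[OF LG] by blast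

lemma add_eq_inf_sup: "(a::'a) + b = sup a b + inf a b"
  using lattice_ab_group_add.add_eq_inf_sup[OF LG] by blast

lemma double_nonneg: "0 \<le> (a::'a) + a \<Longrightarrow> 0 \<le> a"
  using lattice_ab_group_add.zero_le_double_add_iff_zero_le_single_add[OF LG] by blast

lemma scale_sup: "0 \<le> c \<Longrightarrow> c *\<^sub>R sup (a::'a) b = sup (c *\<^sub>R a) (c *\<^sub>R b)"
proof (cases "c = 0")
  case True then show ?thesis by simp
next
  case False
  assume c: "0 \<le> c"
  hence cp: "0 < c" using False by simp
  show ?thesis
  proof (rule order.antisym)
    show "sup (c *\<^sub>R a) (c *\<^sub>R b) \<le> c *\<^sub>R sup a b"
      by (simp add: c scaleR_left_mono)
    have "a \<le> (1/c) *\<^sub>R sup (c *\<^sub>R a) (c *\<^sub>R b)"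
    proof -
      have "(1/c) *\<^sub>R (c *\<^sub>R a) \<le> (1/c) *\<^sub>R sup (c *\<^sub>R a) (c *\<^sub>R b)"
        by (rule scaleR_left_mono) (use cp in auto)
      thus ?thesis using cp by simp
    qed
    moreover have "b \<le> (1/c) *\<^sub>R sup (c *\<^sub>R a) (c *\<^sub>R b)"
    proof -
      have "(1/c) *\<^sub>R (c *\<^sub>R b) \<le> (1/c) *\<^sub>R sup (c *\<^sub>R a) (c *\<^sub>R b)"
        by (rule scaleR_left_mono) (use cp in auto)
      thus ?thesis using cp by simp
    qed
    ultimately have "sup a b \<le> (1/c) *\<^sub>R sup (c *\<^sub>R a) (c *\<^sub>R b)" by simp
    hence "c *\<^sub>R sup a b \<le> c *\<^sub>R ((1/c) *\<^sub>R sup (c *\<^sub>R a) (c *\<^sub>R b))"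
      using c scaleR_left_mono by blast
    thus "c *\<^sub>R sup a b \<le> sup (c *\<^sub>R a) (c *\<^sub>R b)" using cp by simp
  qed
qed

lemma scale_inf: "0 \<le> c \<Longrightarrow> c *\<^sub>R inf (a::'a) b = inf (c *\<^sub>R a) (c *\<^sub>R b)"
proof -
  assume c: "0 \<le> c"
  have "c *\<^sub>R inf a b = c *\<^sub>R (- sup (-a) (-b))"
    by (simp add: neg_sup)
  also have "\<dots> = - (c *\<^sub>R sup (-a) (-b))" by (rule scaleR_minus_right)
  also have "\<dots> = - sup (c *\<^sub>R (-a)) (c *\<^sub>R (-b))" using scale_sup[OF c] by simp
  also have "\<dots> = inf (c *\<^sub>R a) (c *\<^sub>R b)" by (simp add: neg_sup)
  finally show ?thesis .
qed

lemma vabs_ge: "(x::'a) \<le> vabs x" "- x \<le> vabs x"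
  by (auto simp: vabs_def)

lemma vabs_nonneg: "0 \<le> vabs (x::'a)"
proof -
  have "x + - x \<le> vabs x + vabs x" by (rule add_mono) (auto simp: vabs_def)
  hence "0 \<le> vabs x + vabs x" by simp
  thus ?thesis by (rule double_nonneg)
qed

lemma vabs_minus: "vabs (- (x::'a)) = vabs x"
  by (simp add: vabs_def sup_commute)

lemma vabs_diff_comm: "vabs ((x::'a) - y) = vabs (y - x)"
  by (metis minus_diff_eq vabs_minus)

lemma vabs_pos: "0 \<le> (x::'a) \<Longrightarrow> vabs x = x"
  unfolding vabs_def by (meson dual_order.trans neg_le_0_iff_le sup.absorb1)

lemma vabs_zero[simp]: "vabs (0::'a) = 0"
  by (simp add: vabs_def)

lemma vabs_eq_0: "vabs (x::'a) = 0 \<longleftrightarrow> x = 0"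
  unfolding vabs_def using lattice_ab_group_add.sup_0_eq_0[OF LG] by blast

lemma vabs_le: "(x::'a) \<le> c \<Longrightarrow> - x \<le> c \<Longrightarrow> vabs x \<le> c"
  by (simp add: vabs_def)

lemma vabs_triangle: "vabs ((x::'a) + y) \<le> vabs x + vabs y"
proof (rule vabs_le)
  show "x + y \<le> vabs x + vabs y" by (intro add_mono vabs_ge)
  show "- (x + y) \<le> vabs x + vabs y" using add_mono[OF vabs_ge(2)[of x] vabs_ge(2)[of y]] by simp
qed

lemma vabs_rev: "vabs (x::'a) - vabs y \<le> vabs (x + y)"
proof -
  have "vabs x = vabs ((x + y) + (- y))" by simp
  also have "\<dots> \<le> vabs (x+y) + vabs (-y)" by (rule vabs_triangle)
  finally show ?thesis by (simp add: vabs_minus algebra_simps)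
qed

lemma vabs_scale: "vabs (c *\<^sub>R (x::'a)) = \<bar>c\<bar> *\<^sub>R vabs x"
proof (cases "0 \<le> c")
  case True
  then show ?thesis unfolding vabs_def using scale_sup[OF True] by simp
next
  case False
  hence "c *\<^sub>R x = \<bar>c\<bar> *\<^sub>R (- x)" by simp
  then show ?thesis unfolding vabs_def
    using scale_sup[of "\<bar>c\<bar>" "-x" x] by (simp add: sup_commute)
qed

lemma riesz: "0 \<le> (x::'a) \<Longrightarrow> 0 \<le> y \<Longrightarrow> 0 \<le> z \<Longrightarrow> inf (x+y) z \<le> inf x z + inf y z"
proof -
  assume x: "0 \<le> x" and y: "0 \<le> y" and z: "0 \<le> z"
  define w where "w = inf (x+y) z"
  have "w - inf x z = w + - inf x z" by simp
  also have "\<dots> = w + sup (-x) (-z)" by (simp only: neg_inf)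
  also have "\<dots> = sup (w + -x) (w + -z)" by (rule add_sup_l)
  also have "\<dots> = sup (w - x) (w - z)" by simp
  also have "\<dots> \<le> inf y z"
  proof (rule sup_least)
    have "w \<le> x + y" unfolding w_def by simp
    hence "w - x \<le> (x + y) - x" by (rule diff_right_mono)
    hence "w - x \<le> y" by simp
    moreover have "w - x \<le> z" unfolding w_def using x
      by (simp add: add_increasing2 diff_le_eq)
    ultimately show "w - x \<le> inf y z" by simp
    have a: "w - z \<le> 0" unfolding w_def by simp
    have b: "0 \<le> inf y z" using y z by simp
    from a b show "w - z \<le> inf y z" by (rule order.trans)
  qed
  finally have "w - inf x z \<le> inf y z" .
  hence "w - inf x z + inf x z \<le> inf y z + inf x z" by (rule add_right_mono)
  hence "w \<le> inf y z + inf x z" by simp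
  thus ?thesis unfolding w_def by (simp only: add.commute)
qed

lemma pp_nonneg: "0 \<le> pp (x::'a)" and np_nonneg: "0 \<le> np (x::'a)"
  by (auto simp: pp_def np_def)

lemma pp_np: "(x::'a) = pp x - np x"
proof -
  have "pp x - np x = sup x 0 + inf x 0" unfolding pp_def np_def
    by (simp add: neg_sup)
  also have "\<dots> = x + 0" using add_eq_inf_sup[of x 0] by simp
  finally show ?thesis by simp
qed

lemma pp_le_vabs: "pp (x::'a) \<le> vabs x" and np_le_vabs: "np (x::'a) \<le> vabs x"
  unfolding pp_def np_def using vabs_nonneg[of x] vabs_ge[of x] by auto

lemma pp_np_sum: "pp (x::'a) + np x = sup (sup x (-x)) 0"
proof -
  have "pp x + np x = sup (x + np x) (0 + np x)" unfolding pp_def by (rule add_sup_r)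
  also have "x + np x = sup (x + -x) (x + 0)" unfolding np_def by (rule add_sup_l)
  also have "0 + np x = sup (-x) 0" unfolding np_def by simp
  finally show ?thesis by (simp add: sup_assoc sup_commute sup_left_commute)
qed

lemma pp_np_inf: "inf (pp (x::'a)) (np x) = 0"
proof -
  have "pp x + np x = sup (pp x) (np x) + inf (pp x) (np x)" by (rule add_eq_inf_sup)
  moreover have "pp x + np x = sup (sup x (-x)) 0" by (rule pp_np_sum)
  moreover have "sup (pp x) (np x) = sup (sup x (-x)) 0"
    unfolding pp_def np_def by (simp add: sup_assoc sup_commute sup_left_commute)
  ultimately show ?thesis by simp
qed

lemma vabs_pp_np: "vabs (x::'a) = pp x + np x"
proof -
  have "pp x + np x = sup (sup x (-x)) 0" by (rule pp_np_sum)
  thus ?thesis using vabs_nonneg[of x] unfolding vabs_def by (simp add: sup.absorb1)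
qed

lemma pp_mono: "(x::'a) \<le> y \<Longrightarrow> pp x \<le> pp y"
  unfolding pp_def by (simp add: le_supI1)

end

context
  fixes dummy :: "'a::{ordered_real_vector,lattice}"
begin

lemma disj_sym: "disj (x::'a) y \<Longrightarrow> disj y x"
  by (simp add: disj_def inf_commute)

lemma disj_zero: "disj (x::'a) 0" "disj 0 (x::'a)"
  by (simp_all add: disj_def inf.absorb2 inf.absorb1 vabs_nonneg)

lemma disj_self: "disj (x::'a) x \<Longrightarrow> x = 0"
  by (simp add: disj_def vabs_eq_0)

lemma disj_I: "inf (vabs (a::'a)) (vabs b) \<le> 0 \<Longrightarrow> disj a b"
  unfolding disj_def using vabs_nonneg[of a] vabs_nonneg[of b]
  by (meson inf.boundedI order.antisym)

lemma disj_mono: "vabs (a::'a) \<le> vabs a' \<Longrightarrow> vabs (b::'a) \<le> vabs b' \<Longrightarrow> disj a' b' \<Longrightarrow> disj a b"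
  unfolding disj_def
  by (metis disj_I disj_def inf_mono)

lemma disj_bound:
  assumes "vabs (a::'a) \<le> k *\<^sub>R p" "vabs (b::'a) \<le> k *\<^sub>R q" "0 \<le> k" "inf p q = 0"
  shows "disj a b"
proof (rule disj_I)
  have "inf (vabs a) (vabs b) \<le> inf (k *\<^sub>R p) (k *\<^sub>R q)" using assms(1,2) by (rule inf_mono)
  also have "\<dots> = k *\<^sub>R inf p q" by (rule scale_inf[OF assms(3), symmetric])
  finally show "inf (vabs a) (vabs b) \<le> 0" using assms(4) by simp
qed

lemma disj_add: "disj (a::'a) c \<Longrightarrow> disj b c \<Longrightarrow> disj (a+b) c"
proof -
  assume ac: "disj a c" and bc: "disj b c"
  show ?thesis
  proof (rule disj_I)
    have "inf (vabs (a+b)) (vabs c) \<le> inf (vabs a + vabs b) (vabs c)"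
      using vabs_triangle[of a b] by (rule inf_mono) simp
    also have "\<dots> \<le> inf (vabs a) (vabs c) + inf (vabs b) (vabs c)"
      by (rule riesz) (simp_all add: vabs_nonneg)
    also have "\<dots> = 0" using ac bc by (simp add: disj_def)
    finally show "inf (vabs (a+b)) (vabs c) \<le> 0" .
  qed
qed

lemma disj_minus: "disj (a::'a) c \<Longrightarrow> disj (-a) c"
  by (simp add: disj_def vabs_minus)

lemma disj_diff: "disj (a::'a) c \<Longrightarrow> disj b c \<Longrightarrow> disj (a-b) c"
  using disj_add[of a c "-b"] disj_minus[of b c] by simp

lemma disj_scale: "disj (a::'a) c \<Longrightarrow> disj (t *\<^sub>R a) c"
proof -
  assume ac: "disj a c"
  define m where "m = max \<bar>t\<bar> 1"
  have m0: "0 \<le> m" "1 \<le> m" "\<bar>t\<bar> \<le> m" unfolding m_def by auto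
  have "vabs (t *\<^sub>R a) \<le> m *\<^sub>R vabs a"
    unfolding vabs_scale using m0(3) vabs_nonneg[of a] by (rule scaleR_right_mono)
  moreover have "vabs c \<le> m *\<^sub>R vabs c"
    using scaleR_right_mono[OF m0(2) vabs_nonneg[of c]] by simp
  moreover have "inf (vabs a) (vabs c) = 0" using ac by (simp add: disj_def)
  ultimately show ?thesis using m0(1) disj_bound by blast
qed

lemma sup_minus_inf: "sup (p::'a) q - inf p q = sup (sup 0 (q - p)) (sup (p - q) 0)"
proof -
  have "sup p q - inf p q = sup p q + sup (-p) (-q)" by (simp add: neg_inf flip: diff_conv_add_uminus)
  also have "\<dots> = sup (sup p q + -p) (sup p q + -q)" by (rule add_sup_l)
  also have "sup p q + -p = sup (p + -p) (q + -p)" by (rule add_sup_r)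
  also have "sup p q + -q = sup (p + -q) (q + -q)" by (rule add_sup_r)
  finally show ?thesis by simp
qed

lemma disj_vabs_le: "disj (u::'a) v \<Longrightarrow> vabs u \<le> vabs (u + v)"
proof -
  assume d: "disj u v"
  define p where "p = vabs u"
  define q where "q = vabs v"
  have pq: "inf p q = 0" using d by (simp add: disj_def p_def q_def)
  have 1: "p - q \<le> vabs (u+v)" unfolding p_def q_def by (rule vabs_rev)
  have 2: "q - p \<le> vabs (u+v)" unfolding p_def q_def using vabs_rev[of v u] by (simp add: add.commute)
  have 3: "0 \<le> vabs (u+v)" by (rule vabs_nonneg)
  have "sup p q - inf p q \<le> vabs (u+v)" unfolding sup_minus_inf using 1 2 3 by simp
  hence "sup p q \<le> vabs (u+v)" using pq by simp
  thus ?thesis unfolding p_def by (meson le_sup_iff)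
qed

lemma frag_le: "fragment (g::'a) x \<Longrightarrow> vabs g \<le> vabs x \<and> vabs (x - g) \<le> vabs x"
proof -
  assume f: "fragment g x"
  hence d: "disj g (x - g)" by (simp add: fragment_def)
  have "vabs g \<le> vabs (g + (x - g))" using d by (rule disj_vabs_le)
  moreover have "vabs (x - g) \<le> vabs ((x - g) + g)" using disj_sym[OF d] by (rule disj_vabs_le)
  ultimately show ?thesis by simp
qed

lemma frag_zero: "fragment 0 (x::'a)" and frag_self: "fragment (x::'a) x"
  by (simp_all add: fragment_def disj_zero)

lemma frag_add:
  assumes xy: "disj (x::'a) y" and g1: "fragment g1 x" and g2: "fragment g2 y"
  shows "fragment (g1+g2) (x+y) \<and> disj g1 g2 \<and> disj (x - g1) (y - g2)"
proof -
  have l1: "vabs g1 \<le> vabs x" "vabs (x - g1) \<le> vabs x" using frag_le[OF g1] by auto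
  have l2: "vabs g2 \<le> vabs y" "vabs (y - g2) \<le> vabs y" using frag_le[OF g2] by auto
  have a: "disj g1 (x - g1)" using g1 by (simp add: fragment_def)
  have b: "disj g2 (y - g2)" using g2 by (simp add: fragment_def)
  have c: "disj g1 (y - g2)" using l1(1) l2(2) xy by (rule disj_mono)
  have d: "disj g2 (x - g1)" using l2(1) l1(1) disj_sym[OF xy] l1(2) by (meson disj_mono order_refl)
  have e: "disj g1 g2" using l1(1) l2(1) xy by (rule disj_mono)
  have f: "disj (x - g1) (y - g2)" using l1(2) l2(2) xy by (rule disj_mono)
  have "disj (g1 + g2) ((x - g1) + (y - g2))"
    apply (rule disj_add)
     apply (rule disj_sym, rule disj_add, rule disj_sym[OF a], rule disj_sym[OF c])
    apply (rule disj_sym, rule disj_add, rule disj_sym[OF d], rule disj_sym[OF b])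
    done
  moreover have "(x - g1) + (y - g2) = (x + y) - (g1 + g2)" by simp
  ultimately show ?thesis using e f by (simp add: fragment_def)
qed

lemma dec_pos:
  assumes "0 \<le> (z::'a)" "0 \<le> p" "0 \<le> q" "inf p q = 0" "z \<le> p + q"
  shows "z = inf z p + inf z q"
proof (rule order.antisym)
  have "inf (p + q) z \<le> inf p z + inf q z" using assms by (intro riesz) auto
  moreover have "inf (p+q) z = z" using assms(5) by (simp add: inf.absorb2)
  ultimately show "z \<le> inf z p + inf z q" by (simp add: inf_commute)
  have "inf z p + inf z q = sup (inf z p) (inf z q) + inf (inf z p) (inf z q)" by (rule add_eq_inf_sup)
  moreover have "inf (inf z p) (inf z q) = 0"
  proof (rule order.antisym)
    have "inf (inf z p) (inf z q) \<le> inf p q" by (meson inf_le2 inf_mono)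
    thus "inf (inf z p) (inf z q) \<le> 0" using assms(4) by simp
    show "0 \<le> inf (inf z p) (inf z q)" using assms(1-3) by simp
  qed
  ultimately show "inf z p + inf z q \<le> z" by simp
qed

lemma vabs_diff_bound: "vabs (a::'a) \<le> k *\<^sub>R p \<Longrightarrow> vabs b \<le> k *\<^sub>R p \<Longrightarrow> vabs (a - b) \<le> (2*k) *\<^sub>R p"
proof -
  assume a: "vabs a \<le> k *\<^sub>R p" and b: "vabs b \<le> k *\<^sub>R p"
  have "vabs (a - b) = vabs (a + - b)" by simp
  also have "\<dots> \<le> vabs a + vabs (-b)" by (rule vabs_triangle)
  also have "\<dots> \<le> k *\<^sub>R p + k *\<^sub>R p" using a b by (simp add: vabs_minus add_mono)
  also have "\<dots> = (2*k) *\<^sub>R p" by (simp add: scaleR_left_distrib[symmetric])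
  finally show ?thesis .
qed

lemma vabs_add_bound: "vabs (a::'a) \<le> k *\<^sub>R p \<Longrightarrow> vabs b \<le> k *\<^sub>R p \<Longrightarrow> vabs (a + b) \<le> (2*k) *\<^sub>R p"
  using vabs_diff_bound[of a k p "-b"] by (simp add: vabs_minus)

lemma dec:
  assumes "0 \<le> (p::'a)" "0 \<le> q" "inf p q = 0" "vabs z \<le> p + q"
  shows "\<exists>z1 z2. z = z1 + z2 \<and> vabs z1 \<le> 2 *\<^sub>R p \<and> vabs z2 \<le> 2 *\<^sub>R q"
proof -
  have pz: "pp z = inf (pp z) p + inf (pp z) q"
    using assms pp_nonneg[of z] pp_le_vabs[of z] by (intro dec_pos) auto
  have nz: "np z = inf (np z) p + inf (np z) q"
    using assms np_nonneg[of z] np_le_vabs[of z] by (intro dec_pos) auto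
  define z1 where "z1 = inf (pp z) p - inf (np z) p"
  define z2 where "z2 = inf (pp z) q - inf (np z) q"
  have "z = pp z - np z" by (rule pp_np)
  also have "\<dots> = z1 + z2" unfolding z1_def z2_def using pz nz by (metis add_diff_add)
  finally have "z = z1 + z2" .
  moreover have "vabs z1 \<le> (2*1) *\<^sub>R p" unfolding z1_def
    by (rule vabs_diff_bound) (simp_all add: vabs_pos pp_nonneg np_nonneg assms)
  moreover have "vabs z2 \<le> (2*1) *\<^sub>R q" unfolding z2_def
    by (rule vabs_diff_bound) (simp_all add: vabs_pos pp_nonneg np_nonneg assms)
  ultimately show ?thesis by auto
qed

lemma uniq:
  assumes "0 \<le> k" "inf (p::'a) q = 0" "a + b = a' + b'"
    "vabs a \<le> k *\<^sub>R p" "vabs a' \<le> k *\<^sub>R p" "vabs b \<le> k *\<^sub>R q" "vabs b' \<le> k *\<^sub>R q"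
  shows "a = a'"
proof -
  have e: "a - a' = b' - b" using assms(3) by (simp add: algebra_simps)
  have 1: "vabs (a - a') \<le> (2*k) *\<^sub>R p" using assms(4,5) by (rule vabs_diff_bound)
  have 2: "vabs (a - a') \<le> (2*k) *\<^sub>R q" unfolding e using assms(7,6) by (rule vabs_diff_bound)
  have "disj (a - a') (a - a')" using 1 2 _ assms(2) by (rule disj_bound) (use assms(1) in simp)
  thus ?thesis using disj_self by fastforce
qed

lemma frag_split:
  assumes xy: "disj (x::'a) y" and g: "fragment g (x+y)"
  shows "\<exists>g1 g2. g = g1 + g2 \<and> fragment g1 x \<and> fragment g2 y"
proof -
  define p where "p = vabs x"
  define q where "q = vabs y"
  have p0: "0 \<le> p" and q0: "0 \<le> q" unfolding p_def q_def by (simp_all add: vabs_nonneg)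
  have pq: "inf p q = 0" using xy by (simp add: disj_def p_def q_def)
  define h where "h = x + y - g"
  have gh: "disj g h" using g by (simp add: fragment_def h_def)
  have sxy: "vabs (x+y) \<le> p + q" unfolding p_def q_def by (rule vabs_triangle)
  have bg: "vabs g \<le> p + q" using disj_vabs_le[OF gh] sxy by (simp add: h_def)
  have bh: "vabs h \<le> p + q" using disj_vabs_le[OF disj_sym[OF gh]] sxy by (simp add: h_def)
  obtain g1 g2 where G: "g = g1 + g2" "vabs g1 \<le> 2 *\<^sub>R p" "vabs g2 \<le> 2 *\<^sub>R q"
    using dec[OF p0 q0 pq bg] by blast
  obtain h1 h2 where H: "h = h1 + h2" "vabs h1 \<le> 2 *\<^sub>R p" "vabs h2 \<le> 2 *\<^sub>R q"
    using dec[OF p0 q0 pq bh] by blast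
  have s1: "vabs (g1 + h1) \<le> (2*2) *\<^sub>R p" by (rule vabs_add_bound) (use G H in auto)
  have s2: "vabs (g2 + h2) \<le> (2*2) *\<^sub>R q" by (rule vabs_add_bound) (use G H in auto)
  have px: "vabs x \<le> (2*2) *\<^sub>R p" unfolding p_def
    using scaleR_right_mono[of 1 "2*2" "vabs x"] vabs_nonneg[of x] by simp
  have qy: "vabs y \<le> (2*2) *\<^sub>R q" unfolding q_def
    using scaleR_right_mono[of 1 "2*2" "vabs y"] vabs_nonneg[of y] by simp
  have sum: "(g1 + h1) + (g2 + h2) = x + y" using G(1) H(1) by (simp add: h_def algebra_simps)
  have x1: "g1 + h1 = x" by (rule uniq[of "2*2" p q _ "g2+h2" _ y]) (use sum s1 s2 px qy pq in auto)
  have y1: "g2 + h2 = y" using sum x1 by simp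
  have d12: "disj g1 g2" by (rule disj_bound[of _ 2 p _ q]) (use G pq in auto)
  have e12: "disj h1 h2" by (rule disj_bound[of _ 2 p _ q]) (use H pq in auto)
  have ag1: "vabs g1 \<le> vabs g" using disj_vabs_le[OF d12] G(1) by simp
  have ag2: "vabs g2 \<le> vabs g" using disj_vabs_le[OF disj_sym[OF d12]] G(1) by (simp add: add.commute)
  have ah1: "vabs h1 \<le> vabs h" using disj_vabs_le[OF e12] H(1) by simp
  have ah2: "vabs h2 \<le> vabs h" using disj_vabs_le[OF disj_sym[OF e12]] H(1) by (simp add: add.commute)
  have "disj g1 h1" using ag1 ah1 gh by (rule disj_mono)
  moreover have "h1 = x - g1" using x1 by (simp add: eq_diff_eq add.commute)
  ultimately have f1: "fragment g1 x" by (simp add: fragment_def)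
  have "disj g2 h2" using ag2 ah2 gh by (rule disj_mono)
  moreover have "h2 = y - g2" using y1 by (simp add: eq_diff_eq add.commute)
  ultimately have f2: "fragment g2 y" by (simp add: fragment_def)
  show ?thesis using G(1) f1 f2 by blast
qed

end

lemma dc_mem: "y \<in> disj_compl X \<longleftrightarrow> (\<forall>x\<in>X. disj x y)"
  by (simp add: disj_compl_def)

lemma dc_anti: "X \<subseteq> Y \<Longrightarrow> disj_compl Y \<subseteq> disj_compl X"
  by (auto simp: disj_compl_def)

lemma dc_dc: "X \<subseteq> disj_compl (disj_compl (X::'a::{ordered_real_vector,lattice} set))"
  by (auto simp: disj_compl_def intro: disj_sym)

lemma dc_zero: "x \<in> X \<Longrightarrow> x \<in> disj_compl X \<Longrightarrow> (x::'a::{ordered_real_vector,lattice}) = 0"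
  by (auto simp: disj_compl_def intro: disj_self)

context
  fixes dummy :: "'b::{ordered_real_vector, conditionally_complete_lattice}"
begin

lemma inf_Sup_le:
  assumes "D \<noteq> {}" "bdd_above D" "\<And>d. d \<in> D \<Longrightarrow> inf d (c::'b) \<le> m"
  shows "inf (Sup D) c \<le> m"
proof -
  define s where "s = Sup D"
  have "s \<le> m + sup s c - c" unfolding s_def
  proof (rule cSup_least[OF assms(1)])
    fix d assume d: "d \<in> D"
    have "d + c = sup d c + inf d c" by (rule add_eq_inf_sup)
    moreover have "sup d c \<le> sup (Sup D) c" using cSup_upper[OF d assms(2)] by (simp add: le_supI1)
    moreover have "inf d c \<le> m" using assms(3)[OF d] .
    ultimately have "d + c \<le> sup (Sup D) c + m" by (metis add_mono)
    thus "d \<le> m + sup (Sup D) c - c" by (simp add: le_diff_eq add.commute)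
  qed
  hence "s + c - sup s c \<le> m" by (simp add: algebra_simps)
  moreover have "s + c - sup s c = inf s c" using add_eq_inf_sup[of s c] by simp
  ultimately show ?thesis unfolding s_def by simp
qed

lemma dc_band: "band (disj_compl (X::'b set))"
  unfolding band_def
proof (intro conjI ballI allI impI)
  show "0 \<in> disj_compl X" by (simp add: dc_mem disj_zero)
next
  fix a b assume "a \<in> disj_compl X" "b \<in> disj_compl X"
  thus "a + b \<in> disj_compl X" unfolding dc_mem by (meson disj_add disj_sym)
next
  fix c a assume "a \<in> disj_compl X"
  thus "c *\<^sub>R a \<in> disj_compl X" unfolding dc_mem by (meson disj_scale disj_sym)
next
  fix a y assume "a \<in> disj_compl X" "vabs y \<le> vabs a"
  thus "y \<in> disj_compl X" unfolding dc_mem by (meson disj_mono order_refl)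
next
  fix D assume D: "D \<subseteq> disj_compl X \<and> D \<noteq> {} \<and> bdd_above D"
  show "Sup D \<in> disj_compl X" unfolding dc_mem
  proof
    fix x assume x: "x \<in> X"
    define c where "c = vabs x"
    have c0: "0 \<le> c" unfolding c_def by (rule vabs_nonneg)
    from D obtain d0 where d0: "d0 \<in> D" by blast
    from D obtain U where U: "\<And>d. d \<in> D \<Longrightarrow> d \<le> U" by (auto simp: bdd_above_def)
    define D' where "D' = pp ` D"
    have D'ne: "D' \<noteq> {}" using d0 D'_def by blast
    have D'bdd: "bdd_above D'" unfolding D'_def bdd_above_def using U pp_mono by blast
    have dd: "\<And>d. d \<in> D \<Longrightarrow> inf (vabs d) c = 0"
      using D x by (auto simp: dc_mem disj_def c_def inf_commute)
    have i1: "inf (Sup D') c \<le> 0"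
    proof (rule inf_Sup_le[OF D'ne D'bdd])
      fix e assume "e \<in> D'"
      then obtain d where d: "d \<in> D" "e = pp d" unfolding D'_def by blast
      have "inf e c \<le> inf (vabs d) c" using d(2) pp_le_vabs inf_mono by blast
      thus "inf e c \<le> 0" using dd[OF d(1)] by simp
    qed
    have S0: "0 \<le> Sup D'"
      using cSup_upper[OF _ D'bdd, of "pp d0"] d0 pp_nonneg[of d0] D'_def by force
    have "Sup D \<le> Sup D'"
    proof (rule cSup_least)
      show "D \<noteq> {}" using D by blast
      fix d assume d: "d \<in> D"
      have "d \<le> pp d" by (simp add: pp_def)
      also have "pp d \<le> Sup D'" using cSup_upper[OF _ D'bdd] d D'_def by blast
      finally show "d \<le> Sup D'" .
    qed
    hence pS: "pp (Sup D) \<le> Sup D'" unfolding pp_def using S0 by simp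
    have "- Sup D \<le> - d0" using cSup_upper[OF d0] D by simp
    hence "- Sup D \<le> vabs d0" using vabs_ge(2)[of d0] by (rule order.trans)
    hence nS: "np (Sup D) \<le> vabs d0" unfolding np_def using vabs_nonneg[of d0] by simp
    have "vabs (Sup D) \<le> Sup D' + vabs d0" using vabs_pp_np[of "Sup D"] add_mono[OF pS nS] by simp
    hence "inf (vabs (Sup D)) c \<le> inf (Sup D' + vabs d0) c" by (simp add: le_infI1)
    also have "\<dots> \<le> inf (Sup D') c + inf (vabs d0) c" by (rule riesz) (simp_all add: S0 vabs_nonneg c0)
    also have "\<dots> \<le> 0" using i1 dd[OF d0] by simp
    finally have "inf (vabs (Sup D)) c \<le> 0" .
    hence "disj (Sup D) x" unfolding c_def by (rule disj_I)
    thus "disj x (Sup D)" by (rule disj_sym)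
  qed
qed


lemma band_parts:
  assumes "band (B::'b set)"
  shows "0 \<in> B" "\<forall>x\<in>B. \<forall>y\<in>B. x + y \<in> B" "\<forall>c. \<forall>x\<in>B. c *\<^sub>R x \<in> B"
     "\<forall>x\<in>B. \<forall>y. vabs y \<le> vabs x \<longrightarrow> y \<in> B"
     "\<forall>D. D \<subseteq> B \<and> D \<noteq> {} \<and> bdd_above D \<longrightarrow> Sup D \<in> B"
proof -
  have h: "0 \<in> B \<and> (\<forall>x\<in>B. \<forall>y\<in>B. x + y \<in> B) \<and> (\<forall>c. \<forall>x\<in>B. c *\<^sub>R x \<in> B) \<and>
     (\<forall>x\<in>B. \<forall>y. vabs y \<le> vabs x \<longrightarrow> y \<in> B) \<and>
     (\<forall>D. D \<subseteq> B \<and> D \<noteq> {} \<and> bdd_above D \<longrightarrow> Sup D \<in> B)"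
    using assms unfolding band_def .
  show "0 \<in> B" using h by (rule conjunct1)
  show "\<forall>x\<in>B. \<forall>y\<in>B. x + y \<in> B" using h[THEN conjunct2] by (rule conjunct1)
  show "\<forall>c. \<forall>x\<in>B. c *\<^sub>R x \<in> B" using h[THEN conjunct2, THEN conjunct2] by (rule conjunct1)
  show "\<forall>x\<in>B. \<forall>y. vabs y \<le> vabs x \<longrightarrow> y \<in> B" using h[THEN conjunct2, THEN conjunct2, THEN conjunct2] by (rule conjunct1)
  show "\<forall>D. D \<subseteq> B \<and> D \<noteq> {} \<and> bdd_above D \<longrightarrow> Sup D \<in> B" using h[THEN conjunct2, THEN conjunct2, THEN conjunct2] by (rule conjunct2)
qed

lemma band_add: "band B \<Longrightarrow> x \<in> B \<Longrightarrow> y \<in> B \<Longrightarrow> x + (y::'b) \<in> B"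
  using band_parts(2) by blast

lemma band_scale: "band B \<Longrightarrow> x \<in> B \<Longrightarrow> c *\<^sub>R (x::'b) \<in> B"
  using band_parts(3) by blast

lemma band_diff: "band B \<Longrightarrow> x \<in> B \<Longrightarrow> y \<in> B \<Longrightarrow> x - (y::'b) \<in> B"
  using band_add[of B x "(-1) *\<^sub>R y"] band_scale[of B y "-1"] by simp

lemma band_solid: "band B \<Longrightarrow> x \<in> B \<Longrightarrow> vabs y \<le> vabs x \<Longrightarrow> (y::'b) \<in> B"
  using band_parts(4) by blast

lemma band_Sup: "band B \<Longrightarrow> D \<subseteq> B \<Longrightarrow> D \<noteq> {} \<Longrightarrow> bdd_above D \<Longrightarrow> Sup D \<in> (B::'b set)"
  using band_parts(5) by blast

lemma band_zero: "band B \<Longrightarrow> (0::'b) \<in> B"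
  using band_parts(1) by blast

lemma archimedean:
  assumes u: "0 \<le> (u::'b)" and le: "\<And>e::real. e > 0 \<Longrightarrow> y \<le> e *\<^sub>R u"
  shows "y \<le> 0"
proof -
  define a where "a = pp y"
  have a0: "0 \<le> a" unfolding a_def by (rule pp_nonneg)
  have na: "real n *\<^sub>R a \<le> u" for n :: nat
  proof (cases "n = 0")
    case True then show ?thesis using u by simp
  next
    case False
    hence np: "real n > 0" by simp
    have "y \<le> (1 / real n) *\<^sub>R u" using le np by simp
    hence "real n *\<^sub>R y \<le> real n *\<^sub>R ((1 / real n) *\<^sub>R u)" by (rule scaleR_left_mono) (use np in auto)
    hence "real n *\<^sub>R y \<le> u" using np by simp
    moreover have "real n *\<^sub>R a = sup (real n *\<^sub>R y) 0" unfolding a_def pp_def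
      using scale_sup[of "real n" y 0] by simp
    ultimately show ?thesis using u by simp
  qed
  define D where "D = range (\<lambda>n::nat. real n *\<^sub>R a)"
  have Dbdd: "bdd_above D" unfolding D_def bdd_above_def using na by blast
  define s where "s = Sup D"
  have "s \<le> s - a" unfolding s_def
  proof (rule cSup_least)
    show "D \<noteq> {}" unfolding D_def by simp
    fix d assume "d \<in> D"
    then obtain n where n: "d = real n *\<^sub>R a" unfolding D_def by blast
    have "real (Suc n) *\<^sub>R a \<le> Sup D" using cSup_upper[OF _ Dbdd] D_def by blast
    moreover have "real (Suc n) *\<^sub>R a = d + a" using n by (simp add: scaleR_left_distrib)
    ultimately show "d \<le> Sup D - a" by (simp add: le_diff_eq)
  qed
  hence "a \<le> 0" by (simp add: le_diff_eq)
  hence "a = 0" using a0 by simp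
  moreover have "y \<le> pp y" by (simp add: pp_def)
  ultimately show ?thesis unfolding a_def by simp
qed

lemma sup_chain:
  assumes w: "0 \<le> (w::'b)" and p: "0 \<le> p"
  defines "s \<equiv> Sup (range (\<lambda>n::nat. inf w (real n *\<^sub>R p)))"
  shows "s \<le> w" "disj (w - s) p"
proof -
  define f where "f = (\<lambda>n::nat. inf w (real n *\<^sub>R p))"
  have bdd: "bdd_above (range f)" unfolding f_def bdd_above_def by (rule exI[of _ w]) simp
  have ne: "range f \<noteq> {}" by simp
  show sw: "s \<le> w" unfolding s_def f_def[symmetric] by (rule cSup_least[OF ne]) (auto simp: f_def)
  define c where "c = inf (w - s) p"
  have c0: "0 \<le> c" unfolding c_def using sw p by simp
  have "s \<le> s - c" unfolding s_def f_def[symmetric]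
  proof (rule cSup_least[OF ne])
    fix d assume "d \<in> range f"
    then obtain n where n: "d = f n" by blast
    have fs: "f n \<le> Sup (range f)" using cSup_upper[OF _ bdd] by blast
    have "f n + c \<le> w"
    proof -
      have "c \<le> w - s" unfolding c_def by simp
      hence "f n + c \<le> s + (w - s)" using fs add_mono unfolding s_def f_def by blast
      thus ?thesis by simp
    qed
    moreover have "f n + c \<le> real (Suc n) *\<^sub>R p"
    proof -
      have "f n \<le> real n *\<^sub>R p" unfolding f_def by simp
      moreover have "c \<le> p" unfolding c_def by simp
      ultimately have "f n + c \<le> real n *\<^sub>R p + p" by (rule add_mono)
      thus ?thesis by (simp add: scaleR_left_distrib add.commute)
    qed
    ultimately have "f n + c \<le> f (Suc n)" unfolding f_def by simp
    also have "f (Suc n) \<le> Sup (range f)" using cSup_upper[OF _ bdd] by blast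
    finally show "d \<le> Sup (range f) - c" using n by (simp add: le_diff_eq)
  qed
  hence "c \<le> 0" by (simp add: le_diff_eq)
  hence "c = 0" using c0 by simp
  moreover have "w - s \<ge> 0" using sw by simp
  ultimately show "disj (w - s) p" unfolding disj_def c_def using p by (simp add: vabs_pos)
qed

lemma sup_chain_in:
  assumes w: "0 \<le> (w::'b)" and p: "0 \<le> p" and B: "band B" and pB: "p \<in> B"
  shows "Sup (range (\<lambda>n::nat. inf w (real n *\<^sub>R p))) \<in> B"
proof (rule band_Sup[OF B])
  show "range (\<lambda>n::nat. inf w (real n *\<^sub>R p)) \<subseteq> B"
  proof
    fix d assume "d \<in> range (\<lambda>n::nat. inf w (real n *\<^sub>R p))"
    then obtain n where n: "d = inf w (real n *\<^sub>R p)" by blast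
    have np: "real n *\<^sub>R p \<in> B" using band_scale[OF B pB] .
    have "vabs d \<le> vabs (real n *\<^sub>R p)" unfolding n using w p
      by (simp add: vabs_pos scaleR_nonneg_nonneg)
    thus "d \<in> B" using band_solid[OF B np] by blast
  qed
  show "range (\<lambda>n::nat. inf w (real n *\<^sub>R p)) \<noteq> {}" by simp
  show "bdd_above (range (\<lambda>n::nat. inf w (real n *\<^sub>R p)))" unfolding bdd_above_def by (rule exI[of _ w]) simp
qed

lemma principal_proj:
  assumes p: "0 \<le> (p::'b)"
  shows "\<exists>b. b \<in> disj_compl (disj_compl {p}) \<and> z - b \<in> disj_compl {p}"
proof -
  define B where "B = disj_compl (disj_compl {p})"
  have B: "band B" unfolding B_def by (rule dc_band)
  have pB: "p \<in> B" unfolding B_def using dc_dc by blast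
  define s1 where "s1 = Sup (range (\<lambda>n::nat. inf (pp z) (real n *\<^sub>R p)))"
  define s2 where "s2 = Sup (range (\<lambda>n::nat. inf (np z) (real n *\<^sub>R p)))"
  have s1B: "s1 \<in> B" unfolding s1_def by (rule sup_chain_in[OF pp_nonneg p B pB])
  have s2B: "s2 \<in> B" unfolding s2_def by (rule sup_chain_in[OF np_nonneg p B pB])
  have d1: "disj (pp z - s1) p" unfolding s1_def by (rule sup_chain(2)[OF pp_nonneg p])
  have d2: "disj (np z - s2) p" unfolding s2_def by (rule sup_chain(2)[OF np_nonneg p])
  have C: "band (disj_compl {p})" by (rule dc_band)
  have "(pp z - s1) - (np z - s2) \<in> disj_compl {p}"
    by (rule band_diff[OF C]) (use d1 d2 disj_sym in \<open>auto simp: dc_mem\<close>)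
  moreover have "(pp z - s1) - (np z - s2) = z - (s1 - s2)"
    using pp_np[of z] by (simp add: algebra_simps)
  moreover have "s1 - s2 \<in> B" by (rule band_diff[OF B s1B s2B])
  ultimately show ?thesis unfolding B_def by metis
qed

end

definition isproj :: "('b::{ordered_real_vector, conditionally_complete_lattice} \<Rightarrow> 'b) \<Rightarrow> 'b set \<Rightarrow> bool" where
  "isproj \<rho> B \<longleftrightarrow> band B \<and> (\<forall>x. \<rho> x \<in> B \<and> x - \<rho> x \<in> disj_compl B)"

lemma disj_pos: "disj (b::'a::{ordered_real_vector,lattice}) c \<Longrightarrow> 0 \<le> b + c \<Longrightarrow> 0 \<le> b"
proof -
  assume d: "disj b c" and s: "0 \<le> b + c"
  have "0 + - b \<le> (b + c) + - b" using s by (rule add_right_mono)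
  hence "- b \<le> c" by simp
  hence "- b \<le> pp c" unfolding pp_def by (simp add: le_supI1)
  hence "np b \<le> pp c" unfolding np_def pp_def by simp
  hence "np b \<le> vabs c" using pp_le_vabs order.trans by blast
  moreover have "np b \<le> vabs b" by (rule np_le_vabs)
  ultimately have "np b \<le> inf (vabs b) (vabs c)" by simp
  moreover have "inf (vabs b) (vabs c) = 0" using d by (simp add: disj_def)
  ultimately have "np b \<le> 0" by simp
  hence "np b = 0" using np_nonneg[of b] by simp
  hence "b = pp b" using pp_np[of b] by simp
  thus ?thesis using pp_nonneg[of b] by simp
qed

context
  fixes dummy :: "'b::{ordered_real_vector, conditionally_complete_lattice}"
begin

lemma isprojD: "isproj \<rho> (B::'b set) \<Longrightarrow> band B" "isproj \<rho> B \<Longrightarrow> \<rho> x \<in> B"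
  "isproj \<rho> B \<Longrightarrow> x - \<rho> x \<in> disj_compl B"
  by (simp_all add: isproj_def)

lemma isproj_uniq: "isproj \<rho> (B::'b set) \<Longrightarrow> b \<in> B \<Longrightarrow> z - b \<in> disj_compl B \<Longrightarrow> \<rho> z = b"
proof -
  assume P: "isproj \<rho> B" and b: "b \<in> B" and zb: "z - b \<in> disj_compl B"
  have B: "band B" using P by (rule isprojD)
  have C: "band (disj_compl B)" by (rule dc_band)
  have 1: "\<rho> z - b \<in> B" by (rule band_diff[OF B isprojD(2)[OF P] b])
  have "(z - b) - (z - \<rho> z) \<in> disj_compl B" by (rule band_diff[OF C zb isprojD(3)[OF P]])
  hence 2: "\<rho> z - b \<in> disj_compl B" by simp
  have "\<rho> z - b = 0" using 1 2 by (rule dc_zero)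
  thus ?thesis by simp
qed

lemma isproj_fix: "isproj \<rho> (B::'b set) \<Longrightarrow> b \<in> B \<Longrightarrow> \<rho> b = b"
  by (rule isproj_uniq) (simp_all add: band_zero dc_band)

lemma isproj_ker: "isproj \<rho> (B::'b set) \<Longrightarrow> z \<in> disj_compl B \<Longrightarrow> \<rho> z = 0"
  by (rule isproj_uniq) (simp_all add: band_zero isprojD(1))

lemma isproj_ker2: "isproj \<rho> (B::'b set) \<Longrightarrow> \<rho> z = 0 \<Longrightarrow> z \<in> disj_compl B"
  using isprojD(3)[of \<rho> B z] by simp

lemma isproj_idem: "isproj \<rho> (B::'b set) \<Longrightarrow> \<rho> (\<rho> z) = \<rho> z"
  using isproj_fix isprojD(2) by blast

lemma isproj_add: "isproj \<rho> (B::'b set) \<Longrightarrow> \<rho> (x + y) = \<rho> x + \<rho> y"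
proof -
  assume P: "isproj \<rho> B"
  have B: "band B" using P by (rule isprojD)
  have C: "band (disj_compl B)" by (rule dc_band)
  show ?thesis
  proof (rule isproj_uniq[OF P])
    show "\<rho> x + \<rho> y \<in> B" by (rule band_add[OF B]; rule isprojD(2)[OF P])
    have "(x - \<rho> x) + (y - \<rho> y) \<in> disj_compl B" by (rule band_add[OF C]; rule isprojD(3)[OF P])
    thus "x + y - (\<rho> x + \<rho> y) \<in> disj_compl B" by (simp add: algebra_simps)
  qed
qed

lemma isproj_scale: "isproj \<rho> (B::'b set) \<Longrightarrow> \<rho> (c *\<^sub>R x) = c *\<^sub>R \<rho> x"
proof -
  assume P: "isproj \<rho> B"
  have B: "band B" using P by (rule isprojD)
  have C: "band (disj_compl B)" by (rule dc_band)
  show ?thesis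
  proof (rule isproj_uniq[OF P])
    show "c *\<^sub>R \<rho> x \<in> B" by (rule band_scale[OF B isprojD(2)[OF P]])
    have "c *\<^sub>R (x - \<rho> x) \<in> disj_compl B" by (rule band_scale[OF C isprojD(3)[OF P]])
    thus "c *\<^sub>R x - c *\<^sub>R \<rho> x \<in> disj_compl B" by (simp add: scaleR_diff_right)
  qed
qed

lemma isproj_zero: "isproj \<rho> (B::'b set) \<Longrightarrow> \<rho> 0 = 0"
  using isproj_scale[of \<rho> B 0 0] by simp

lemma isproj_diff: "isproj \<rho> (B::'b set) \<Longrightarrow> \<rho> (x - y) = \<rho> x - \<rho> y"
  using isproj_add[of \<rho> B "x - y" y] by simp

lemma isproj_pos: "isproj \<rho> (B::'b set) \<Longrightarrow> 0 \<le> z \<Longrightarrow> 0 \<le> \<rho> z \<and> \<rho> z \<le> z"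
proof -
  assume P: "isproj \<rho> B" and z: "0 \<le> z"
  have d: "disj (\<rho> z) (z - \<rho> z)"
    using isprojD(2)[OF P, of z] isprojD(3)[OF P, of z] by (simp add: dc_mem)
  have "0 \<le> \<rho> z" using disj_pos[OF d] z by simp
  moreover have "0 \<le> z - \<rho> z" using disj_pos[OF disj_sym[OF d]] z by simp
  ultimately show ?thesis by simp
qed

lemma isproj_mono: "isproj \<rho> (B::'b set) \<Longrightarrow> x \<le> y \<Longrightarrow> \<rho> x \<le> \<rho> y"
proof -
  assume P: "isproj \<rho> B" and "x \<le> y"
  hence "0 \<le> y - x" by simp
  hence "0 \<le> \<rho> (y - x)" using isproj_pos[OF P] by blast
  thus ?thesis using isproj_diff[OF P] by simp
qed

lemma isproj_compl: "isproj \<rho> (B::'b set) \<Longrightarrow> isproj (\<lambda>z. z - \<rho> z) (disj_compl B)"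
  unfolding isproj_def
proof (intro conjI allI)
  assume P: "band B \<and> (\<forall>x. \<rho> x \<in> B \<and> x - \<rho> x \<in> disj_compl B)"
  show "band (disj_compl B)" by (rule dc_band)
  fix x
  show "x - \<rho> x \<in> disj_compl B" using P by blast
  have "\<rho> x \<in> B" using P by blast
  thus "x - (x - \<rho> x) \<in> disj_compl (disj_compl B)" using dc_dc by auto
qed

lemma isproj_bp: "isproj \<rho> (B::'b set) \<Longrightarrow> band_proj \<rho>"
  unfolding band_proj_def isproj_def by blast

lemma bp_isproj: "band_proj (\<rho>::'b \<Rightarrow> 'b) \<Longrightarrow> isproj \<rho> (range \<rho>)"
proof -
  assume "band_proj \<rho>"
  then obtain B where P: "isproj \<rho> B" unfolding band_proj_def isproj_def by blast
  have "range \<rho> = B"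
  proof
    show "range \<rho> \<subseteq> B" using isprojD(2)[OF P] by blast
    show "B \<subseteq> range \<rho>" using isproj_fix[OF P] by (metis rangeI subsetI)
  qed
  thus ?thesis using P by simp
qed

definition pproj :: "'b \<Rightarrow> 'b \<Rightarrow> 'b" where
  "pproj p z = (SOME b. b \<in> disj_compl (disj_compl {p}) \<and> z - b \<in> disj_compl {p})"

lemma pproj_isproj: "0 \<le> (p::'b) \<Longrightarrow> isproj (pproj p) (disj_compl (disj_compl {p}))"
proof -
  assume p: "0 \<le> p"
  have h: "pproj p z \<in> disj_compl (disj_compl {p}) \<and> z - pproj p z \<in> disj_compl {p}" for z
    unfolding pproj_def by (rule someI_ex) (rule principal_proj[OF p])
  show ?thesis unfolding isproj_def
  proof (intro conjI allI)
    show "band (disj_compl (disj_compl {p}))" by (rule dc_band)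
    fix x
    show "pproj p x \<in> disj_compl (disj_compl {p})" using h by blast
    show "x - pproj p x \<in> disj_compl (disj_compl (disj_compl {p}))" using h dc_dc by blast
  qed
qed

lemma pproj_p: "0 \<le> (p::'b) \<Longrightarrow> pproj p p = p"
  by (rule isproj_fix[OF pproj_isproj]) (use dc_dc in auto)

end

lemma ortho_frag: "orth_additive Q \<Longrightarrow> fragment g e \<Longrightarrow> Q e = Q g + Q (e - g)"
proof -
  assume "orth_additive Q" "fragment g e"
  hence "Q (g + (e - g)) = Q g + Q (e - g)" unfolding orth_additive_def fragment_def by blast
  thus ?thesis by simp
qed

lemma ortho_zero: "orth_additive (Q::'a::{ordered_real_vector,lattice} \<Rightarrow> 'b::{ordered_real_vector,lattice}) \<Longrightarrow> Q 0 = 0"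
proof -
  assume "orth_additive Q"
  hence "Q (0 + 0) = Q 0 + Q 0" unfolding orth_additive_def using disj_zero by blast
  thus ?thesis by simp
qed

lemma pu_parts:
  assumes "partition_of_unity A (\<rho> :: 'i \<Rightarrow> ('b::{ordered_real_vector, conditionally_complete_lattice} \<Rightarrow> 'b))"
  shows "\<And>\<alpha>. \<alpha> \<in> A \<Longrightarrow> band_proj (\<rho> \<alpha>)"
    "\<And>\<pi>. band_proj \<pi> \<Longrightarrow> (\<And>\<alpha>. \<alpha> \<in> A \<Longrightarrow> proj_le (\<rho> \<alpha>) \<pi>) \<Longrightarrow> \<pi> = id"
proof -
  have h: "(\<forall>\<alpha>\<in>A. band_proj (\<rho> \<alpha>)) \<and>
     (\<forall>\<alpha>\<in>A. \<forall>\<beta>\<in>A. \<alpha> \<noteq> \<beta> \<longrightarrow> (\<forall>x. \<rho> \<alpha> (\<rho> \<beta> x) = 0)) \<and>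
     (\<forall>\<pi>. band_proj \<pi> \<and> (\<forall>\<alpha>\<in>A. proj_le (\<rho> \<alpha>) \<pi>) \<longrightarrow> \<pi> = id)"
    using assms unfolding partition_of_unity_def .
  show "\<And>\<alpha>. \<alpha> \<in> A \<Longrightarrow> band_proj (\<rho> \<alpha>)" using h[THEN conjunct1] by (rule bspec)
  fix \<pi> assume "band_proj \<pi>" "\<And>\<alpha>. \<alpha> \<in> A \<Longrightarrow> proj_le (\<rho> \<alpha>) \<pi>"
  hence "band_proj \<pi> \<and> (\<forall>\<alpha>\<in>A. proj_le (\<rho> \<alpha>) \<pi>)" by simp
  moreover have hh: "\<forall>\<pi>. band_proj \<pi> \<and> (\<forall>\<alpha>\<in>A. proj_le (\<rho> \<alpha>) \<pi>) \<longrightarrow> \<pi> = id"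
    using h by (rule conjunct2[THEN conjunct2])
  ultimately show "\<pi> = id" by blast
qed

lemma backward_key:
  fixes T S Q :: "'a::{ordered_real_vector, lattice} \<Rightarrow> 'b::{ordered_real_vector, conditionally_complete_lattice}"
    and \<rho> :: "'i \<Rightarrow> 'b \<Rightarrow> 'b"
  assumes Q: "orth_additive Q" and QT: "op_le Q T" and QS: "op_le Q S"
    and pu: "partition_of_unity A \<rho>"
    and fr: "\<forall>\<alpha>\<in>A. fragment (ea \<alpha>) e"
    and bd: "\<forall>\<alpha>\<in>A. \<rho> \<alpha> (T (ea \<alpha>)) \<le> \<epsilon> *\<^sub>R T e \<and> \<rho> \<alpha> (S (e - ea \<alpha>)) \<le> \<epsilon> *\<^sub>R S e"
  shows "Q e \<le> \<epsilon> *\<^sub>R (T e + S e)"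
proof -
  define u where "u = T e + S e"
  define y where "y = Q e - \<epsilon> *\<^sub>R u"
  define x where "x = pp y"
  have x0: "0 \<le> x" unfolding x_def by (rule pp_nonneg)
  have rx: "\<rho> \<alpha> x = 0" if a: "\<alpha> \<in> A" for \<alpha>
  proof -
    have P: "isproj (\<rho> \<alpha>) (range (\<rho> \<alpha>))" by (rule bp_isproj, rule pu_parts(1)[OF pu a])
    define g where "g = ea \<alpha>"
    have "Q e = Q g + Q (e - g)" using ortho_frag[OF Q] fr a g_def by blast
    moreover have "Q g \<le> T g" using QT unfolding op_le_def positive_op_def by simp
    moreover have "Q (e - g) \<le> S (e - g)" using QS unfolding op_le_def positive_op_def by simp
    ultimately have "Q e \<le> T g + S (e - g)" by (simp add: add_mono)
    hence "\<rho> \<alpha> (Q e) \<le> \<rho> \<alpha> (T g + S (e - g))" by (rule isproj_mono[OF P])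
    also have "\<dots> = \<rho> \<alpha> (T g) + \<rho> \<alpha> (S (e - g))" by (rule isproj_add[OF P])
    also have "\<dots> \<le> \<epsilon> *\<^sub>R T e + \<epsilon> *\<^sub>R S e"
    proof -
      have "\<rho> \<alpha> (T g) \<le> \<epsilon> *\<^sub>R T e" "\<rho> \<alpha> (S (e-g)) \<le> \<epsilon> *\<^sub>R S e" using bd a unfolding g_def by auto
      thus ?thesis by (rule add_mono)
    qed
    also have "\<dots> = \<epsilon> *\<^sub>R u" unfolding u_def by (simp add: scaleR_right_distrib)
    finally have "\<rho> \<alpha> (\<rho> \<alpha> (Q e)) \<le> \<rho> \<alpha> (\<epsilon> *\<^sub>R u)" by (rule isproj_mono[OF P])
    hence "\<rho> \<alpha> (Q e) \<le> \<rho> \<alpha> (\<epsilon> *\<^sub>R u)" by (simp add: isproj_idem[OF P])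
    hence ry: "\<rho> \<alpha> y \<le> 0" unfolding y_def by (simp add: isproj_diff[OF P])
    have "\<rho> \<alpha> (pp y) = \<rho> \<alpha> y + \<rho> \<alpha> (np y)"
      using pp_np[of y] isproj_add[OF P, of y "np y"] by (simp add: algebra_simps)
    moreover have "\<rho> \<alpha> y + \<rho> \<alpha> (np y) \<le> 0 + \<rho> \<alpha> (np y)" using ry by (rule add_right_mono)
    ultimately have 1: "\<rho> \<alpha> (pp y) \<le> \<rho> \<alpha> (np y)" by simp
    have 2: "0 \<le> \<rho> \<alpha> (pp y)" "\<rho> \<alpha> (pp y) \<le> pp y" using isproj_pos[OF P pp_nonneg] by auto
    have 3: "\<rho> \<alpha> (np y) \<le> np y" using isproj_pos[OF P np_nonneg] by auto
    have "\<rho> \<alpha> (pp y) \<le> np y" using 1 3 by (rule order.trans)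
    hence "\<rho> \<alpha> (pp y) \<le> inf (pp y) (np y)" using 2(2) by simp
    hence "\<rho> \<alpha> (pp y) \<le> 0" by (simp add: pp_np_inf)
    thus ?thesis unfolding x_def using 2 by simp
  qed
  define \<pi> where "\<pi> = (\<lambda>z. z - pproj x z)"
  have Px: "isproj (pproj x) (disj_compl (disj_compl {x}))" by (rule pproj_isproj[OF x0])
  have Ppi: "isproj \<pi> (disj_compl (disj_compl (disj_compl {x})))" unfolding \<pi>_def
    by (rule isproj_compl[OF Px])
  have le: "proj_le (\<rho> \<alpha>) \<pi>" if a: "\<alpha> \<in> A" for \<alpha>
    unfolding proj_le_def
  proof (intro allI impI)
    fix z :: 'b assume z: "0 \<le> z"
    have P: "isproj (\<rho> \<alpha>) (range (\<rho> \<alpha>))" by (rule bp_isproj, rule pu_parts(1)[OF pu a])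
    have "x \<in> disj_compl (range (\<rho> \<alpha>))" by (rule isproj_ker2[OF P rx[OF a]])
    hence "\<forall>w\<in>range (\<rho> \<alpha>). disj w x" by (simp add: dc_mem)
    hence "range (\<rho> \<alpha>) \<subseteq> disj_compl {x}"
    proof (intro subsetI)
      fix w assume "\<forall>w\<in>range (\<rho> \<alpha>). disj w x" "w \<in> range (\<rho> \<alpha>)"
      hence "disj w x" by (rule bspec)
      hence "disj x w" by (rule disj_sym)
      thus "w \<in> disj_compl {x}" by (simp add: dc_mem)
    qed
    hence sub: "disj_compl (disj_compl {x}) \<subseteq> disj_compl (range (\<rho> \<alpha>))" by (rule dc_anti)
    have "pproj x z \<in> disj_compl (range (\<rho> \<alpha>))" using isprojD(2)[OF Px] sub by blast
    hence k: "\<rho> \<alpha> (pproj x z) = 0" by (rule isproj_ker[OF P])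
    have "\<rho> \<alpha> z = \<rho> \<alpha> (\<pi> z)" unfolding \<pi>_def using isproj_diff[OF P] k by simp
    also have "\<dots> \<le> \<pi> z"
    proof -
      have "0 \<le> \<pi> z" using isproj_pos[OF Ppi z] by simp
      thus ?thesis using isproj_pos[OF P] by simp
    qed
    finally show "\<rho> \<alpha> z \<le> \<pi> z" .
  qed
  have "\<pi> = id" by (rule pu_parts(2)[OF pu isproj_bp[OF Ppi] le])
  hence "x - pproj x x = x" unfolding \<pi>_def by (simp add: fun_eq_iff)
  hence "pproj x x = 0" by simp
  hence "x = 0" using pproj_p[OF x0] by simp
  moreover have "y \<le> pp y" by (simp add: pp_def)
  ultimately have "y \<le> 0" unfolding x_def by simp
  thus ?thesis unfolding y_def u_def by simp
qed

lemma inf_sum: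
  fixes A B :: "'b::{ordered_real_vector, conditionally_complete_lattice} set"
  assumes A: "A \<noteq> {}" "bdd_below A" and B: "B \<noteq> {}" "bdd_below B"
  shows "Inf {a + b | a b. a \<in> A \<and> b \<in> B} = Inf A + Inf B"
proof -
  define C where "C = {a + b | a b. a \<in> A \<and> b \<in> B}"
  have Cne: "C \<noteq> {}" using A B unfolding C_def by blast
  have lb: "Inf A + Inf B \<le> c" if "c \<in> C" for c
  proof -
    obtain a b where ab: "c = a + b" "a \<in> A" "b \<in> B" using \<open>c \<in> C\<close> unfolding C_def by blast
    have "Inf A \<le> a" by (rule cInf_lower[OF ab(2) A(2)])
    moreover have "Inf B \<le> b" by (rule cInf_lower[OF ab(3) B(2)])
    ultimately show ?thesis using ab(1) by (simp add: add_mono)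
  qed
  have Cbdd: "bdd_below C" unfolding bdd_below_def using lb by blast
  have 1: "Inf A + Inf B \<le> Inf C" by (rule cInf_greatest[OF Cne lb])
  have "Inf C - Inf A \<le> Inf B"
  proof (rule cInf_greatest[OF B(1)])
    fix b assume b: "b \<in> B"
    have "Inf C - b \<le> Inf A"
    proof (rule cInf_greatest[OF A(1)])
      fix a assume a: "a \<in> A"
      have "a + b \<in> C" unfolding C_def using a b by blast
      hence "Inf C \<le> a + b" by (rule cInf_lower[OF _ Cbdd])
      thus "Inf C - b \<le> a" by (simp add: diff_le_eq)
    qed
    thus "Inf C - Inf A \<le> b" by (simp add: diff_le_eq le_diff_eq add.commute)
  qed
  hence "Inf C \<le> Inf A + Inf B" by (simp add: diff_le_eq add.commute)
  with 1 show ?thesis unfolding C_def by simp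
qed

definition Rop :: "('a::{ordered_real_vector, lattice} \<Rightarrow> 'b::{ordered_real_vector, conditionally_complete_lattice}) \<Rightarrow> ('a \<Rightarrow> 'b) \<Rightarrow> 'a \<Rightarrow> 'b" where
  "Rop T S f = Inf {T g + S (f - g) | g. fragment g f}"

context
  fixes T S :: "'a::{ordered_real_vector, lattice} \<Rightarrow> 'b::{ordered_real_vector, conditionally_complete_lattice}"
  assumes Tp: "positive_op T" and Sp: "positive_op S" and To: "orth_additive T" and So: "orth_additive S"
begin

lemma W_ne: "{T g + S (f - g) | g. fragment g f} \<noteq> {}"
  using frag_zero[of f] by blast

lemma W_bdd: "bdd_below {T g + S (f - g) | g. fragment g f}"
  unfolding bdd_below_def
proof (rule exI[of _ 0], intro ballI)
  fix w assume "w \<in> {T g + S (f - g) | g. fragment g f}"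
  then obtain g where "w = T g + S (f - g)" by blast
  moreover have "0 \<le> T g" "0 \<le> S (f - g)" using Tp Sp by (simp_all add: positive_op_def)
  ultimately show "0 \<le> w" by simp
qed

lemma R_le_T: "Rop T S f \<le> T f"
proof -
  have "T f + S (f - f) \<in> {T g + S (f - g) | g. fragment g f}" using frag_self[of f] by blast
  hence "Rop T S f \<le> T f + S (f - f)" unfolding Rop_def by (rule cInf_lower[OF _ W_bdd])
  thus ?thesis using ortho_zero[OF So] by simp
qed

lemma R_le_S: "Rop T S f \<le> S f"
proof -
  have "T 0 + S (f - 0) \<in> {T g + S (f - g) | g. fragment g f}" using frag_zero[of f] by blast
  hence "Rop T S f \<le> T 0 + S (f - 0)" unfolding Rop_def by (rule cInf_lower[OF _ W_bdd])
  thus ?thesis using ortho_zero[OF To] by simp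
qed

lemma R_nonneg: "0 \<le> Rop T S f"
  unfolding Rop_def
proof (rule cInf_greatest[OF W_ne])
  fix w assume "w \<in> {T g + S (f - g) | g. fragment g f}"
  then obtain g where "w = T g + S (f - g)" by blast
  moreover have "0 \<le> T g" "0 \<le> S (f - g)" using Tp Sp by (simp_all add: positive_op_def)
  ultimately show "0 \<le> w" by simp
qed

lemma W_split:
  assumes xy: "disj x y"
  shows "{T g + S (x + y - g) | g. fragment g (x + y)} =
    {a + b | a b. a \<in> {T g + S (x - g) | g. fragment g x} \<and> b \<in> {T g + S (y - g) | g. fragment g y}}"
proof -
  have eq: "T (g1 + g2) + S (x + y - (g1 + g2)) = (T g1 + S (x - g1)) + (T g2 + S (y - g2))"
    if g1: "fragment g1 x" and g2: "fragment g2 y" for g1 g2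
  proof -
    have f: "disj g1 g2" "disj (x - g1) (y - g2)" using frag_add[OF xy g1 g2] by auto
    have e1: "T (g1 + g2) = T g1 + T g2" using To f(1) unfolding orth_additive_def by blast
    have e2: "S ((x - g1) + (y - g2)) = S (x - g1) + S (y - g2)" using So f(2) unfolding orth_additive_def by blast
    have e3: "x + y - (g1 + g2) = (x - g1) + (y - g2)" by (simp add: algebra_simps)
    have "T (g1 + g2) + S (x + y - (g1 + g2)) = (T g1 + T g2) + (S (x - g1) + S (y - g2))"
      by (simp only: e1 e3 e2)
    also have "\<dots> = (T g1 + S (x - g1)) + (T g2 + S (y - g2))" by (simp only: add_ac)
    finally show ?thesis .
  qed
  show ?thesis
  proof (intro set_eqI iffI)
    fix w assume "w \<in> {T g + S (x + y - g) | g. fragment g (x + y)}"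
    then obtain g where g: "w = T g + S (x + y - g)" "fragment g (x + y)" by blast
    obtain g1 g2 where G: "g = g1 + g2" "fragment g1 x" "fragment g2 y" using frag_split[OF xy g(2)] by blast
    have "w = (T g1 + S (x - g1)) + (T g2 + S (y - g2))" using g(1) G eq by simp
    thus "w \<in> {a + b | a b. a \<in> {T g + S (x - g) | g. fragment g x} \<and> b \<in> {T g + S (y - g) | g. fragment g y}}"
      using G by blast
  next
    fix w assume "w \<in> {a + b | a b. a \<in> {T g + S (x - g) | g. fragment g x} \<and> b \<in> {T g + S (y - g) | g. fragment g y}}"
    then obtain g1 g2 where G: "w = (T g1 + S (x - g1)) + (T g2 + S (y - g2))" "fragment g1 x" "fragment g2 y" by blast
    have "fragment (g1 + g2) (x + y)" using frag_add[OF xy G(2,3)] by blast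
    moreover have "w = T (g1 + g2) + S (x + y - (g1 + g2))" using G eq by simp
    ultimately show "w \<in> {T g + S (x + y - g) | g. fragment g (x + y)}" by blast
  qed
qed

lemma R_orth: "orth_additive (Rop T S)"
  unfolding orth_additive_def
proof (intro allI impI)
  fix x y :: 'a assume xy: "disj x y"
  show "Rop T S (x + y) = Rop T S x + Rop T S y"
    unfolding Rop_def W_split[OF xy] by (rule inf_sum[OF W_ne W_bdd W_ne W_bdd])
qed

lemma R_uryson: "order_bounded_op T \<Longrightarrow> uryson (Rop T S)"
  unfolding uryson_def
proof (intro conjI R_orth)
  assume ob: "order_bounded_op T"
  show "order_bounded_op (Rop T S)" unfolding order_bounded_op_def
  proof (intro allI)
    fix a b :: 'a
    obtain c d where cd: "\<forall>x. a \<le> x \<and> x \<le> b \<longrightarrow> c \<le> T x \<and> T x \<le> d"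
      using ob unfolding order_bounded_op_def by blast
    have "\<forall>x. a \<le> x \<and> x \<le> b \<longrightarrow> 0 \<le> Rop T S x \<and> Rop T S x \<le> d"
      using cd R_nonneg R_le_T order.trans by blast
    thus "\<exists>c d. \<forall>x. a \<le> x \<and> x \<le> b \<longrightarrow> c \<le> Rop T S x \<and> Rop T S x \<le> d" by blast
  qed
qed

lemma forward_inf:
  assumes ob: "order_bounded_op T" and H: "is_inf_U T S (\<lambda>_. 0)"
    and lb: "\<And>g. fragment g e \<Longrightarrow> u \<le> T g + S (e - g)"
  shows "u \<le> 0"
proof -
  have R0: "Rop T S e \<le> 0"
  proof -
    have "uryson (Rop T S) \<and> op_le (Rop T S) T \<and> op_le (Rop T S) S"
      using R_uryson[OF ob] R_le_T R_le_S by (simp add: op_le_def positive_op_def)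
    hence "op_le (Rop T S) (\<lambda>_. 0)" using H unfolding is_inf_U_def by blast
    thus ?thesis unfolding op_le_def positive_op_def by simp
  qed
  have "u \<le> Rop T S e" unfolding Rop_def
    by (rule cInf_greatest[OF W_ne]) (use lb in blast)
  thus ?thesis using R0 by simp
qed

end

definition good :: "('a::{ordered_real_vector, lattice} \<Rightarrow> 'b::{ordered_real_vector, conditionally_complete_lattice}) \<Rightarrow> ('a \<Rightarrow> 'b) \<Rightarrow> 'a \<Rightarrow> real \<Rightarrow> ('b \<Rightarrow> 'b) \<Rightarrow> bool" where
  "good T S e \<epsilon> \<sigma> \<longleftrightarrow> band_proj \<sigma> \<and> (\<exists>g. fragment g e \<and> \<sigma> (T g) \<le> \<epsilon> *\<^sub>R T e \<and> \<sigma> (S (e - g)) \<le> \<epsilon> *\<^sub>R S e)"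

definition fam :: "('a::{ordered_real_vector, lattice} \<Rightarrow> 'b::{ordered_real_vector, conditionally_complete_lattice}) \<Rightarrow> ('a \<Rightarrow> 'b) \<Rightarrow> 'a \<Rightarrow> real \<Rightarrow> ('b \<Rightarrow> 'b) set set" where
  "fam T S e \<epsilon> = {M. M \<subseteq> Collect (good T S e \<epsilon>) \<and> (\<forall>\<alpha>\<in>M. \<forall>\<beta>\<in>M. \<alpha> \<noteq> \<beta> \<longrightarrow> (\<forall>x. \<alpha> (\<beta> x) = 0))}"

lemma fam_zorn: "\<exists>M\<in>fam T S e \<epsilon>. \<forall>X\<in>fam T S e \<epsilon>. M \<subseteq> X \<longrightarrow> X = M"
proof (rule Zorn_Lemma, intro ballI)
  fix C assume C: "C \<in> chains (fam T S e \<epsilon>)"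
  hence sub: "C \<subseteq> fam T S e \<epsilon>" and ch: "\<forall>A\<in>C. \<forall>B\<in>C. A \<subseteq> B \<or> B \<subseteq> A"
    unfolding chains_def chain_subset_def by auto
  show "\<Union>C \<in> fam T S e \<epsilon>" unfolding fam_def
  proof (intro CollectI conjI ballI impI allI)
    show "\<Union>C \<subseteq> Collect (good T S e \<epsilon>)" using sub unfolding fam_def by blast
    fix \<alpha> \<beta> x assume a: "\<alpha> \<in> \<Union>C" and b: "\<beta> \<in> \<Union>C" and ne: "\<alpha> \<noteq> \<beta>"
    obtain A where A: "A \<in> C" "\<alpha> \<in> A" using a by blast
    obtain B where B: "B \<in> C" "\<beta> \<in> B" using b by blast
    have "A \<subseteq> B \<or> B \<subseteq> A" using ch A(1) B(1) by blast
    then obtain D where D: "D \<in> C" "\<alpha> \<in> D" "\<beta> \<in> D" using A B by blast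
    have "D \<in> fam T S e \<epsilon>" using sub D(1) by blast
    hence "\<forall>\<alpha>\<in>D. \<forall>\<beta>\<in>D. \<alpha> \<noteq> \<beta> \<longrightarrow> (\<forall>x. \<alpha> (\<beta> x) = 0)" unfolding fam_def by blast
    thus "\<alpha> (\<beta> x) = 0" using D ne by blast
  qed
qed

context
  fixes T S :: "'a::{ordered_real_vector, lattice} \<Rightarrow> 'b::{ordered_real_vector, conditionally_complete_lattice}"
    and e :: 'a and \<epsilon> :: real and M :: "('b \<Rightarrow> 'b) set" and \<pi> :: "'b \<Rightarrow> 'b"
  assumes Tp: "positive_op T" and Sp: "positive_op S" and To: "orth_additive T" and So: "orth_additive S"
    and eps: "\<epsilon> > 0"
    and Mf: "M \<in> fam T S e \<epsilon>" and Mmax: "\<forall>X\<in>fam T S e \<epsilon>. M \<subseteq> X \<longrightarrow> X = M"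
    and pibp: "band_proj \<pi>" and pile: "\<forall>\<alpha>\<in>M. proj_le \<alpha> \<pi>"
begin

lemma Ppi: "isproj \<pi> (range \<pi>)" by (rule bp_isproj[OF pibp])

lemma M_good: "\<mu> \<in> M \<Longrightarrow> good T S e \<epsilon> \<mu>"
  using Mf unfolding fam_def by blast

lemma M_disj: "\<mu> \<in> M \<Longrightarrow> \<nu> \<in> M \<Longrightarrow> \<mu> \<noteq> \<nu> \<Longrightarrow> \<mu> (\<nu> x) = 0"
  using Mf unfolding fam_def by blast

lemma M_proj: "\<mu> \<in> M \<Longrightarrow> isproj \<mu> (range \<mu>)"
  using M_good unfolding good_def by (blast intro: bp_isproj)

lemma kill_C: assumes mu: "\<mu> \<in> M" and w: "w \<in> disj_compl (range \<pi>)" shows "\<mu> w = 0"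
proof -
  have Pm: "isproj \<mu> (range \<mu>)" by (rule M_proj[OF mu])
  have le: "\<And>z. 0 \<le> z \<Longrightarrow> \<mu> z \<le> \<pi> z" using pile mu unfolding proj_le_def by blast
  have C: "band (disj_compl (range \<pi>))" by (rule dc_band)
  have z0: "\<mu> q = 0" if q: "0 \<le> q" "vabs q \<le> vabs w" for q
  proof -
    have "q \<in> disj_compl (range \<pi>)" using band_solid[OF C w q(2)] .
    hence "\<pi> q = 0" by (rule isproj_ker[OF Ppi])
    hence "\<mu> q \<le> 0" using le[OF q(1)] by simp
    moreover have "0 \<le> \<mu> q" using isproj_pos[OF Pm q(1)] by simp
    ultimately show ?thesis by simp
  qed
  have "\<mu> (pp w) = 0" by (rule z0) (simp_all add: pp_nonneg vabs_pos pp_le_vabs)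
  moreover have "\<mu> (np w) = 0" by (rule z0) (simp_all add: np_nonneg vabs_pos np_le_vabs)
  ultimately show ?thesis using isproj_diff[OF Pm, of "pp w" "np w"] pp_np[of w] by simp
qed

lemma range_mu: assumes mu: "\<mu> \<in> M" and z: "0 \<le> z" shows "\<mu> z \<in> range \<pi>"
proof -
  have Pm: "isproj \<mu> (range \<mu>)" by (rule M_proj[OF mu])
  have le: "\<And>z. 0 \<le> z \<Longrightarrow> \<mu> z \<le> \<pi> z" using pile mu unfolding proj_le_def by blast
  have m0: "0 \<le> \<mu> z" using isproj_pos[OF Pm z] by simp
  have "\<mu> z = \<mu> (\<mu> z)" using isproj_idem[OF Pm] by simp
  also have "\<dots> \<le> \<pi> (\<mu> z)" by (rule le[OF m0])
  finally have 1: "\<mu> z \<le> \<pi> (\<mu> z)" .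
  have 2: "\<pi> (\<mu> z) \<le> \<mu> z" using isproj_pos[OF Ppi m0] by simp
  have "\<pi> (\<mu> z) = \<mu> z" using 1 2 by simp
  thus ?thesis by (metis rangeI)
qed

lemma extend_false:
  assumes vC: "v \<in> disj_compl (range \<pi>)" and v0: "0 \<le> v" and vne: "v \<noteq> 0"
    and gd: "good T S e \<epsilon> (pproj v)"
  shows False
proof -
  define \<sigma> where "\<sigma> = pproj v"
  have Ps: "isproj \<sigma> (disj_compl (disj_compl {v}))" unfolding \<sigma>_def by (rule pproj_isproj[OF v0])
  have "\<forall>w\<in>range \<pi>. disj w v" using vC by (simp add: dc_mem)
  hence rpi: "range \<pi> \<subseteq> disj_compl {v}"
  proof (intro subsetI)
    fix w assume "\<forall>w\<in>range \<pi>. disj w v" "w \<in> range \<pi>"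
    hence "disj w v" by (rule bspec)
    hence "disj v w" by (rule disj_sym)
    thus "w \<in> disj_compl {v}" by (simp add: dc_mem)
  qed
  hence "disj_compl (disj_compl {v}) \<subseteq> disj_compl (range \<pi>)" by (rule dc_anti)
  hence sC: "\<sigma> z \<in> disj_compl (range \<pi>)" for z using isprojD(2)[OF Ps, of z] by blast
  have kill_pi: "\<sigma> w = 0" if "w \<in> range \<pi>" for w
  proof -
    have "w \<in> disj_compl {v}" using that rpi by blast
    hence "w \<in> disj_compl (disj_compl (disj_compl {v}))" using dc_dc by blast
    thus ?thesis by (rule isproj_ker[OF Ps])
  qed
  have d1: "\<mu> (\<sigma> x) = 0" if "\<mu> \<in> M" for \<mu> x using kill_C[OF that sC] .
  have d2: "\<sigma> (\<mu> x) = 0" if mu: "\<mu> \<in> M" for \<mu> x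
  proof -
    have Pm: "isproj \<mu> (range \<mu>)" by (rule M_proj[OF mu])
    have "\<sigma> (\<mu> (pp x)) = 0" by (rule kill_pi[OF range_mu[OF mu pp_nonneg]])
    moreover have "\<sigma> (\<mu> (np x)) = 0" by (rule kill_pi[OF range_mu[OF mu np_nonneg]])
    moreover have "\<mu> x = \<mu> (pp x) - \<mu> (np x)" using isproj_diff[OF Pm] pp_np[of x] by metis
    ultimately show ?thesis using isproj_diff[OF Ps] by simp
  qed
  have "insert \<sigma> M \<in> fam T S e \<epsilon>" unfolding fam_def
  proof (intro CollectI conjI ballI impI allI)
    show "insert \<sigma> M \<subseteq> Collect (good T S e \<epsilon>)" using gd M_good \<sigma>_def by blast
    fix \<alpha> \<beta> x assume a: "\<alpha> \<in> insert \<sigma> M" and b: "\<beta> \<in> insert \<sigma> M" and ne: "\<alpha> \<noteq> \<beta>"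
    show "\<alpha> (\<beta> x) = 0"
    proof (cases "\<alpha> = \<sigma>")
      case True
      hence "\<beta> \<in> M" using b ne by blast
      thus ?thesis using d2 True by blast
    next
      case False
      hence aM: "\<alpha> \<in> M" using a by blast
      show ?thesis
      proof (cases "\<beta> = \<sigma>")
        case True thus ?thesis using d1[OF aM] by blast
      next
        case False
        hence "\<beta> \<in> M" using b by blast
        thus ?thesis using M_disj[OF aM _ ne] by blast
      qed
    qed
  qed
  hence "insert \<sigma> M = M" using Mmax by blast
  hence "\<sigma> \<in> M" by blast
  hence "\<sigma> (\<sigma> v) = 0" using d1 by blast
  moreover have "\<sigma> v = v" unfolding \<sigma>_def by (rule pproj_p[OF v0])
  ultimately show False using vne by simp
qed


lemma nonzero_false:
  assumes yC: "y \<in> disj_compl (range \<pi>)" and yne: "y \<noteq> 0"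
    and FI: "\<And>u. (\<And>g. fragment g e \<Longrightarrow> u \<le> T g + S (e - g)) \<Longrightarrow> u \<le> 0"
  shows False
proof -
  define C where "C = disj_compl (range \<pi>)"
  have C: "band C" unfolding C_def by (rule dc_band)
  have Te0: "0 \<le> T e" and Se0: "0 \<le> S e" using Tp Sp by (simp_all add: positive_op_def)
  have T0: "T 0 = 0" by (rule ortho_zero[OF To])
  have S0: "S 0 = 0" by (rule ortho_zero[OF So])
  have Tg0: "0 \<le> T g" and Sg0: "0 \<le> S g" for g using Tp Sp by (simp_all add: positive_op_def)
  have epsTe: "0 \<le> \<epsilon> *\<^sub>R T e" using eps Te0 by (simp add: scaleR_nonneg_nonneg)
  have epsSe: "0 \<le> \<epsilon> *\<^sub>R S e" using eps Se0 by (simp add: scaleR_nonneg_nonneg)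
  have pbp: "band_proj (pproj v)" if "0 \<le> v" for v :: 'b by (rule isproj_bp[OF pproj_isproj[OF that]])
  have kill: "pproj v z = 0" if "0 \<le> v" "0 \<le> z" "inf v z = 0" for v z :: 'b
  proof -
    have "disj v z" unfolding disj_def using that by (simp add: vabs_pos)
    hence "z \<in> disj_compl {v}" by (simp add: dc_mem)
    hence "z \<in> disj_compl (disj_compl (disj_compl {v}))" using dc_dc by blast
    thus ?thesis by (rule isproj_ker[OF pproj_isproj[OF that(1)]])
  qed
  define p where "p = vabs y"
  have p0: "0 \<le> p" unfolding p_def by (rule vabs_nonneg)
  have pne: "p \<noteq> 0" unfolding p_def using yne by (simp add: vabs_eq_0)
  have pC: "p \<in> C" using band_solid[OF C yC[folded C_def], of p] p0 by (simp add: vabs_pos p_def)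
  show False
  proof (cases "inf p (T e) = 0")
    case True
    have "good T S e \<epsilon> (pproj p)" unfolding good_def
    proof (intro conjI exI[of _ e])
      show "band_proj (pproj p)" by (rule pbp[OF p0])
      show "fragment e e" by (rule frag_self)
      show "pproj p (T e) \<le> \<epsilon> *\<^sub>R T e" using kill[OF p0 Te0 True] epsTe by simp
      show "pproj p (S (e - e)) \<le> \<epsilon> *\<^sub>R S e" using S0 isproj_zero[OF pproj_isproj[OF p0]] epsSe by simp
    qed
    thus False using extend_false[OF pC[unfolded C_def] p0 pne] by blast
  next
    case False
    define p1 where "p1 = inf p (T e)"
    have p10: "0 \<le> p1" unfolding p1_def using p0 Te0 by simp
    have p1ne: "p1 \<noteq> 0" using False p1_def by simp
    have p1C: "p1 \<in> C" using band_solid[OF C pC, of p1] p0 p10 by (simp add: vabs_pos p1_def)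
    show False
    proof (cases "inf p1 (S e) = 0")
      case True
      have "good T S e \<epsilon> (pproj p1)" unfolding good_def
      proof (intro conjI exI[of _ 0])
        show "band_proj (pproj p1)" by (rule pbp[OF p10])
        show "fragment 0 e" by (rule frag_zero)
        show "pproj p1 (T 0) \<le> \<epsilon> *\<^sub>R T e" using T0 isproj_zero[OF pproj_isproj[OF p10]] epsTe by simp
        show "pproj p1 (S (e - 0)) \<le> \<epsilon> *\<^sub>R S e" using kill[OF p10 Se0 True] epsSe by simp
      qed
      thus False using extend_false[OF p1C[unfolded C_def] p10 p1ne] by blast
    next
      case False
      define p2 where "p2 = inf p1 (S e)"
      have p20: "0 \<le> p2" unfolding p2_def using p10 Se0 by simp
      have p2ne: "p2 \<noteq> 0" using False p2_def by simp
      have p2C: "p2 \<in> C" using band_solid[OF C p1C, of p2] p10 p20 by (simp add: vabs_pos p2_def)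
      have p2T: "p2 \<le> T e" unfolding p2_def p1_def by (meson inf_le1 inf_le2 order.trans)
      have p2S: "p2 \<le> S e" unfolding p2_def by simp
      define u where "u = \<epsilon> *\<^sub>R p2"
      have u0: "0 \<le> u" unfolding u_def using eps p20 by (simp add: scaleR_nonneg_nonneg)
      have une: "u \<noteq> 0" unfolding u_def using eps p2ne by simp
      have uC: "u \<in> C" unfolding u_def by (rule band_scale[OF C p2C])
      have uT: "u \<le> \<epsilon> *\<^sub>R T e" unfolding u_def using p2T eps by (simp add: scaleR_left_mono)
      have uS: "u \<le> \<epsilon> *\<^sub>R S e" unfolding u_def using p2S eps by (simp add: scaleR_left_mono)
      have "\<not> u \<le> 0" using u0 une by simp
      then obtain g where g: "fragment g e" "\<not> u \<le> T g + S (e - g)" using FI by blast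
      define W where "W = T g + S (e - g)"
      have W0: "0 \<le> W" unfolding W_def using Tg0[of g] Sg0[of "e - g"] by simp
      define w where "w = u - W"
      define v where "v = pp w"
      have v0: "0 \<le> v" unfolding v_def by (rule pp_nonneg)
      have vne: "v \<noteq> 0"
      proof
        assume "v = 0"
        moreover have "w \<le> pp w" by (simp add: pp_def)
        ultimately have "w \<le> 0" unfolding v_def by simp
        hence "u \<le> W" unfolding w_def by simp
        thus False using g(2) W_def by simp
      qed
      have vu: "v \<le> u"
      proof -
        have "w \<le> u" unfolding w_def using W0 by simp
        hence "pp w \<le> pp u" by (rule pp_mono)
        moreover have "pp u = u" unfolding pp_def using u0 by (simp add: sup.absorb1)
        ultimately show ?thesis unfolding v_def by simp
      qed
      have vC: "v \<in> C" using band_solid[OF C uC, of v] v0 u0 vu by (simp add: vabs_pos)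
      define \<sigma> where "\<sigma> = pproj v"
      have Ps: "isproj \<sigma> (disj_compl (disj_compl {v}))" unfolding \<sigma>_def by (rule pproj_isproj[OF v0])
      have sn: "\<sigma> (np w) = 0" unfolding \<sigma>_def v_def
        by (rule kill) (simp_all add: pp_nonneg np_nonneg pp_np_inf)
      have "\<sigma> w = \<sigma> (pp w) - \<sigma> (np w)" using isproj_diff[OF Ps] pp_np[of w] by metis
      hence "\<sigma> w = \<sigma> v" using sn v_def by simp
      hence "0 \<le> \<sigma> w" using isproj_pos[OF Ps v0] by simp
      hence "0 \<le> \<sigma> u - \<sigma> W" unfolding w_def using isproj_diff[OF Ps] by simp
      hence sWu: "\<sigma> W \<le> \<sigma> u" by simp
      have "\<sigma> u \<le> u" using isproj_pos[OF Ps u0] by simp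
      hence sW: "\<sigma> W \<le> u" using sWu by simp
      have sWs: "\<sigma> W = \<sigma> (T g) + \<sigma> (S (e - g))" unfolding W_def by (rule isproj_add[OF Ps])
      have sT0: "0 \<le> \<sigma> (T g)" using isproj_pos[OF Ps Tg0] by simp
      have sS0: "0 \<le> \<sigma> (S (e - g))" using isproj_pos[OF Ps Sg0] by simp
      have "\<sigma> (T g) \<le> \<sigma> W" using sWs sS0 by simp
      hence b1: "\<sigma> (T g) \<le> \<epsilon> *\<^sub>R T e" using sW uT by simp
      have "\<sigma> (S (e - g)) \<le> \<sigma> W" using sWs sT0 by simp
      hence b2: "\<sigma> (S (e - g)) \<le> \<epsilon> *\<^sub>R S e" using sW uS by simp
      have "good T S e \<epsilon> \<sigma>" unfolding good_def
        using isproj_bp[OF Ps] g(1) b1 b2 by blast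
      thus False using extend_false[OF vC[unfolded C_def] v0 vne] \<sigma>_def by blast
    qed
  qed
qed

end

theorem mainTheorem1:
  fixes T S :: "'a::{ordered_real_vector, lattice} \<Rightarrow> 'b::{ordered_real_vector, conditionally_complete_lattice}"
  assumes "uryson T" and "positive_op T"
    and "uryson S" and "positive_op S"
  shows "is_inf_U T S (\<lambda>_. 0) \<longleftrightarrow>
    (\<forall>e. \<forall>\<epsilon>::real. \<epsilon> > 0 \<longrightarrow>
       (\<exists>(A :: ('b \<Rightarrow> 'b) set) \<rho> ea.
          partition_of_unity A \<rho> \<and>
          (\<forall>\<alpha>\<in>A. fragment (ea \<alpha>) e) \<and>
          (\<forall>\<alpha>\<in>A. \<rho> \<alpha> (T (ea \<alpha>)) \<le> \<epsilon> *\<^sub>R T e \<and>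
                   \<rho> \<alpha> (S (e - ea \<alpha>)) \<le> \<epsilon> *\<^sub>R S e)))"
proof -
  have To: "orth_additive T" and Tb: "order_bounded_op T" using assms(1) by (simp_all add: uryson_def)
  have So: "orth_additive S" using assms(3) by (simp add: uryson_def)
  have Tp: "positive_op T" and Sp: "positive_op S" using assms(2,4) .
  show ?thesis
  proof
    assume H: "is_inf_U T S (\<lambda>_. 0)"
    show "\<forall>e. \<forall>\<epsilon>::real. \<epsilon> > 0 \<longrightarrow>
       (\<exists>(A :: ('b \<Rightarrow> 'b) set) \<rho> ea.
          partition_of_unity A \<rho> \<and>
          (\<forall>\<alpha>\<in>A. fragment (ea \<alpha>) e) \<and>
          (\<forall>\<alpha>\<in>A. \<rho> \<alpha> (T (ea \<alpha>)) \<le> \<epsilon> *\<^sub>R T e \<and>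
                   \<rho> \<alpha> (S (e - ea \<alpha>)) \<le> \<epsilon> *\<^sub>R S e))"
    proof (intro allI impI)
      fix e :: 'a and \<epsilon> :: real assume eps: "\<epsilon> > 0"
      have FI: "\<And>u. (\<And>g. fragment g e \<Longrightarrow> u \<le> T g + S (e - g)) \<Longrightarrow> u \<le> 0"
        using forward_inf[OF Tp Sp To So Tb H] by blast
      obtain M where Mf: "M \<in> fam T S e \<epsilon>" and Mmax: "\<forall>X\<in>fam T S e \<epsilon>. M \<subseteq> X \<longrightarrow> X = M"
        using fam_zorn by blast
      have Mg: "\<And>\<mu>. \<mu> \<in> M \<Longrightarrow> good T S e \<epsilon> \<mu>" using Mf unfolding fam_def by blast
      have Md: "\<And>\<alpha> \<beta>. \<alpha> \<in> M \<Longrightarrow> \<beta> \<in> M \<Longrightarrow> \<alpha> \<noteq> \<beta> \<Longrightarrow> (\<forall>x. \<alpha> (\<beta> x) = 0)"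
        using Mf unfolding fam_def by blast
      define ea where "ea = (\<lambda>\<alpha>::'b\<Rightarrow>'b. SOME g. fragment g e \<and> \<alpha> (T g) \<le> \<epsilon> *\<^sub>R T e \<and> \<alpha> (S (e - g)) \<le> \<epsilon> *\<^sub>R S e)"
      have ea: "fragment (ea \<alpha>) e \<and> \<alpha> (T (ea \<alpha>)) \<le> \<epsilon> *\<^sub>R T e \<and> \<alpha> (S (e - ea \<alpha>)) \<le> \<epsilon> *\<^sub>R S e"
        if a: "\<alpha> \<in> M" for \<alpha>
      proof -
        have "\<exists>g. fragment g e \<and> \<alpha> (T g) \<le> \<epsilon> *\<^sub>R T e \<and> \<alpha> (S (e - g)) \<le> \<epsilon> *\<^sub>R S e"
          using Mg[OF a] unfolding good_def by blast
        thus ?thesis unfolding ea_def by (rule someI_ex)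
      qed
      have pu: "partition_of_unity M (\<lambda>\<alpha>. \<alpha>)" unfolding partition_of_unity_def
      proof (intro conjI ballI allI impI)
        fix \<alpha> assume "\<alpha> \<in> M" thus "band_proj \<alpha>" using Mg unfolding good_def by blast
      next
        fix \<alpha> \<beta> x assume "\<alpha> \<in> M" "\<beta> \<in> M" "\<alpha> \<noteq> \<beta>" thus "\<alpha> (\<beta> x) = 0" using Md by blast
      next
        fix \<pi> :: "'b \<Rightarrow> 'b" assume h: "band_proj \<pi> \<and> (\<forall>\<alpha>\<in>M. proj_le \<alpha> \<pi>)"
        show "\<pi> = id"
        proof (rule ccontr)
          assume "\<pi> \<noteq> id"
          then obtain z0 where z0: "\<pi> z0 \<noteq> z0" by (metis eq_id_iff)
          have Ppi: "isproj \<pi> (range \<pi>)" using h by (blast intro: bp_isproj)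
          have yC: "z0 - \<pi> z0 \<in> disj_compl (range \<pi>)" by (rule isprojD(3)[OF Ppi])
          have yne: "z0 - \<pi> z0 \<noteq> 0" using z0 by simp
          have hb: "band_proj \<pi>" and hl: "\<forall>\<alpha>\<in>M. proj_le \<alpha> \<pi>" using h by blast+
          show False by (rule nonzero_false[OF Tp Sp To So eps Mf Mmax hb hl yC yne FI])
        qed
      qed
      show "\<exists>(A :: ('b \<Rightarrow> 'b) set) \<rho> ea.
          partition_of_unity A \<rho> \<and>
          (\<forall>\<alpha>\<in>A. fragment (ea \<alpha>) e) \<and>
          (\<forall>\<alpha>\<in>A. \<rho> \<alpha> (T (ea \<alpha>)) \<le> \<epsilon> *\<^sub>R T e \<and>
                   \<rho> \<alpha> (S (e - ea \<alpha>)) \<le> \<epsilon> *\<^sub>R S e)"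
        using pu ea by blast
    qed
  next
    assume H: "\<forall>e. \<forall>\<epsilon>::real. \<epsilon> > 0 \<longrightarrow>
       (\<exists>(A :: ('b \<Rightarrow> 'b) set) \<rho> ea.
          partition_of_unity A \<rho> \<and>
          (\<forall>\<alpha>\<in>A. fragment (ea \<alpha>) e) \<and>
          (\<forall>\<alpha>\<in>A. \<rho> \<alpha> (T (ea \<alpha>)) \<le> \<epsilon> *\<^sub>R T e \<and>
                   \<rho> \<alpha> (S (e - ea \<alpha>)) \<le> \<epsilon> *\<^sub>R S e))"
    show "is_inf_U T S (\<lambda>_. 0)" unfolding is_inf_U_def
    proof (intro conjI allI impI)
      show "uryson (\<lambda>_::'a. 0::'b)"
        unfolding uryson_def orth_additive_def order_bounded_op_def by auto
      show "op_le (\<lambda>_. 0) T" using Tp by (simp add: op_le_def positive_op_def)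
      show "op_le (\<lambda>_. 0) S" using Sp by (simp add: op_le_def positive_op_def)
      fix Q :: "'a \<Rightarrow> 'b" assume HQ: "uryson Q \<and> op_le Q T \<and> op_le Q S"
      have Qo: "orth_additive Q" using HQ by (simp add: uryson_def)
      have QT: "op_le Q T" and QS: "op_le Q S" using HQ by blast+
      show "op_le Q (\<lambda>_. 0)" unfolding op_le_def positive_op_def
      proof
        fix e :: 'a
        have u0: "0 \<le> T e + S e" using Tp Sp by (simp add: positive_op_def)
        have "Q e \<le> 0"
        proof (rule archimedean[OF u0])
          fix \<epsilon> :: real assume eps: "\<epsilon> > 0"
          then obtain A :: "('b \<Rightarrow> 'b) set" and \<rho> ea where
            pu: "partition_of_unity A \<rho>" and fr: "\<forall>\<alpha>\<in>A. fragment (ea \<alpha>) e"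
            and bd: "\<forall>\<alpha>\<in>A. \<rho> \<alpha> (T (ea \<alpha>)) \<le> \<epsilon> *\<^sub>R T e \<and> \<rho> \<alpha> (S (e - ea \<alpha>)) \<le> \<epsilon> *\<^sub>R S e"
            using H by blast
          show "Q e \<le> \<epsilon> *\<^sub>R (T e + S e)" by (rule backward_key[OF Qo QT QS pu fr bd])
        qed
        thus "0 \<le> 0 - Q e" by simp
      qed
    qed
  qed
qed

end
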